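(* Let $M$ be a positive real number. There exists a positive real number $\gamma$, depending only on $M$, such that for every non-zero real number $\xi\in[-M,M]$ and every sequence $(\eta_n)_{n\ge1}$ of real numbers, and for every $\delta>0$, there exists a real number $\varepsilon$ with $0<\varepsilon<\delta$ satisfying $$\inf_{n \ge 1} \, \Vert \xi (1 + \varepsilon)^n + \eta_n \Vert > \gamma\, \varepsilon\, |\log \varepsilon|^{-1}.$$
   Context: For a real number $x$, $\Vert x \Vert$ denotes the distance from $x$ to the nearest integer. $\log$ denotes the natural logarithm. The infimum is over all positive integers $n$. *)

theory Defs
  imports "HOL-Analysis.Analysis"
begin

definition dist_int :: "real \<Rightarrow> real" where
  "dist_int x = (INF k\<in>(\<int>::real set). \<bar>x - k\<bar>)"

end

theory Submission
  imports Defs "HOL-Analysis.Analysis"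
begin


lemma dist_int_ge_iff: "dist_int x \<ge> t \<longleftrightarrow> (\<forall>k\<in>(\<int>::real set). \<bar>x - k\<bar> \<ge> t)"
  unfolding dist_int_def
  by (rule le_cINF_iff) (auto intro: bdd_belowI[where m=0] simp: Ints_def)

lemma dist_int_lt_iff: "dist_int x < t \<longleftrightarrow> (\<exists>z::int. \<bar>x - of_int z\<bar> < t)"
proof -
  have "dist_int x < t \<longleftrightarrow> (\<exists>k\<in>(\<int>::real set). \<bar>x - k\<bar> < t)"
    unfolding dist_int_def
    by (rule cINF_less_iff) (auto intro: bdd_belowI[where m=0] simp: Ints_def)
  also have "\<dots> \<longleftrightarrow> (\<exists>z::int. \<bar>x - of_int z\<bar> < t)" by (auto simp: Ints_def)
  finally show ?thesis .
qed

lemma pow_diff_bounds: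
  fixes a b :: real and n :: nat
  assumes "0 \<le> a" "a \<le> b"
  shows "real n * (b - a) * a ^ (n - 1) \<le> b ^ n - a ^ n"
    and "b ^ n - a ^ n \<le> real n * (b - a) * b ^ (n - 1)"
proof -
  have eq: "b ^ n - a ^ n = (b - a) * (\<Sum>i<n. a ^ (n - Suc i) * b ^ i)"
    by (rule power_diff_sumr2)
  have lo: "a ^ (n - 1) \<le> a ^ (n - Suc i) * b ^ i" if "i < n" for i
  proof -
    have "a ^ (n - 1) = a ^ (n - Suc i) * a ^ i" using that by (simp add: power_add[symmetric])
    also have "\<dots> \<le> a ^ (n - Suc i) * b ^ i"
      using assms by (intro mult_left_mono power_mono) auto
    finally show ?thesis .
  qed
  have hi: "a ^ (n - Suc i) * b ^ i \<le> b ^ (n - 1)" if "i < n" for i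
  proof -
    have "a ^ (n - Suc i) * b ^ i \<le> b ^ (n - Suc i) * b ^ i"
      using assms by (intro mult_right_mono power_mono) auto
    also have "\<dots> = b ^ (n - 1)" using that by (simp add: power_add[symmetric])
    finally show ?thesis .
  qed
  have s1: "real n * a ^ (n - 1) \<le> (\<Sum>i<n. a ^ (n - Suc i) * b ^ i)"
    using sum_mono[of "{..<n}" "\<lambda>_. a ^ (n - 1)" "\<lambda>i. a ^ (n - Suc i) * b ^ i"] lo by simp
  have s2: "(\<Sum>i<n. a ^ (n - Suc i) * b ^ i) \<le> real n * b ^ (n - 1)"
    using sum_mono[of "{..<n}" "\<lambda>i. a ^ (n - Suc i) * b ^ i" "\<lambda>_. b ^ (n - 1)"] hi by simp
  have ba: "0 \<le> b - a" using assms by simp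
  show "real n * (b - a) * a ^ (n - 1) \<le> b ^ n - a ^ n"
    unfolding eq using mult_left_mono[OF s1 ba] by (simp add: algebra_simps)
  show "b ^ n - a ^ n \<le> real n * (b - a) * b ^ (n - 1)"
    unfolding eq using mult_left_mono[OF s2 ba] by (simp add: algebra_simps)
qed

lemma one_plus_pow_le_exp:
  fixes h :: real assumes "0 \<le> h" shows "(1 + h) ^ n \<le> exp (real n * h)"
proof -
  have "(1 + h) ^ n \<le> exp h ^ n" using assms by (intro power_mono) (auto simp: add.commute exp_ge_add_one_self)
  also have "\<dots> = exp (real n * h)" by (simp add: exp_of_nat_mult)
  finally show ?thesis .
qed


lemma card_sat_bound:
  fixes \<Omega> :: "nat set" and f :: "nat \<Rightarrow> 'b" and A G :: "nat set" and p :: real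
  assumes fin: "finite \<Omega>" and GO: "G \<subseteq> \<Omega>"
    and sat: "\<And>\<omega> \<omega>'. \<omega> \<in> \<Omega> \<Longrightarrow> \<omega>' \<in> \<Omega> \<Longrightarrow> f \<omega> = f \<omega>' \<Longrightarrow> \<omega> \<in> G \<Longrightarrow> \<omega>' \<in> G"
    and fib: "\<And>b. real (card (A \<inter> {\<omega>\<in>\<Omega>. f \<omega> = b})) \<le> p * real (card {\<omega>\<in>\<Omega>. f \<omega> = b})"
  shows "real (card (A \<inter> G)) \<le> p * real (card G)"
proof -
  let ?F = "\<lambda>b. {\<omega>\<in>\<Omega>. f \<omega> = b}"
  have Geq: "G = (\<Union>b\<in>f ` G. ?F b)"
  proof
    show "G \<subseteq> (\<Union>b\<in>f ` G. ?F b)" using GO by blast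
    show "(\<Union>b\<in>f ` G. ?F b) \<subseteq> G"
    proof
      fix \<omega> assume "\<omega> \<in> (\<Union>b\<in>f ` G. ?F b)"
      then obtain \<omega>0 where "\<omega>0 \<in> G" "\<omega> \<in> \<Omega>" "f \<omega> = f \<omega>0" by auto
      then show "\<omega> \<in> G" using sat[of \<omega>0 \<omega>] GO by auto
    qed
  qed
  have finG: "finite G" using fin GO finite_subset by blast
  have fins: "\<And>b. finite (?F b)" using fin by auto
  have disj: "\<And>b b'. b \<in> f ` G \<Longrightarrow> b' \<in> f ` G \<Longrightarrow> b \<noteq> b' \<Longrightarrow> ?F b \<inter> ?F b' = {}" by auto
  have c1: "card G = (\<Sum>b\<in>f ` G. card (?F b))"
    by (subst Geq, rule card_UN_disjoint) (use finG fins disj in auto)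
  have AG: "A \<inter> G = (\<Union>b\<in>f ` G. A \<inter> ?F b)" using Geq by blast
  have c2: "card (A \<inter> G) = (\<Sum>b\<in>f ` G. card (A \<inter> ?F b))"
    by (subst AG, rule card_UN_disjoint) (use finG fins disj in auto)
  have "real (card (A \<inter> G)) = (\<Sum>b\<in>f ` G. real (card (A \<inter> ?F b)))" using c2 by simp
  also have "\<dots> \<le> (\<Sum>b\<in>f ` G. p * real (card (?F b)))" by (rule sum_mono) (rule fib)
  also have "\<dots> = p * real (card G)" using c1 by (simp add: sum_distrib_left)
  finally show ?thesis .
qed

locale lll_setup =
  fixes \<Omega> :: "nat set" and A :: "nat \<Rightarrow> nat set" and f :: "nat \<Rightarrow> nat \<Rightarrow> 'b"
    and p x :: "nat \<Rightarrow> real" and \<Gamma> :: "nat \<Rightarrow> nat set"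
  assumes fin: "finite \<Omega>" and AO: "\<And>i. A i \<subseteq> \<Omega>"
    and fib: "\<And>i b. real (card (A i \<inter> {\<omega>\<in>\<Omega>. f i \<omega> = b})) \<le> p i * real (card {\<omega>\<in>\<Omega>. f i \<omega> = b})"
    and sat: "\<And>i j \<omega> \<omega>'. j < i \<Longrightarrow> j \<notin> \<Gamma> i \<Longrightarrow> \<omega> \<in> \<Omega> \<Longrightarrow> \<omega>' \<in> \<Omega> \<Longrightarrow> f i \<omega> = f i \<omega>'
               \<Longrightarrow> \<omega> \<in> A j \<Longrightarrow> \<omega>' \<in> A j"
    and \<Gamma>sub: "\<And>i. \<Gamma> i \<subseteq> {..<i}"
    and comp: "\<And>i j j'. j \<in> \<Gamma> i \<Longrightarrow> j' < i \<Longrightarrow> j' \<notin> \<Gamma> i \<Longrightarrow> j' < j"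
    and xnn: "\<And>i. 0 \<le> x i"
    and px: "\<And>i. p i \<le> x i * (1 - (\<Sum>j\<in>\<Gamma> i. x j))"
    and sumx: "\<And>i. (\<Sum>j\<in>\<Gamma> i. x j) \<le> 1"
    and x1: "\<And>i. x i \<le> 1"
begin

definition G :: "nat set \<Rightarrow> nat set" where "G S = \<Omega> - (\<Union>j\<in>S. A j)"

lemma G_sub: "G S \<subseteq> \<Omega>" unfolding G_def by auto
lemma finG: "finite (G S)" using fin G_sub finite_subset by blast

lemma claim: "S \<subseteq> {..<i} \<Longrightarrow> real (card (A i \<inter> G S)) \<le> x i * real (card (G S))"
proof (induction "card S" arbitrary: S i rule: less_induct)
  case less
  define S1 where "S1 = S \<inter> \<Gamma> i"
  define S2 where "S2 = S - \<Gamma> i"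
  have finS: "finite S" using less.prems finite_subset by blast
  have S2sub: "S2 \<subseteq> S" unfolding S2_def by auto
  have S1fin: "finite S1" using finS S1_def by auto
  have satG: "\<And>\<omega> \<omega>'. \<omega> \<in> \<Omega> \<Longrightarrow> \<omega>' \<in> \<Omega> \<Longrightarrow> f i \<omega> = f i \<omega>' \<Longrightarrow> \<omega> \<in> G S2 \<Longrightarrow> \<omega>' \<in> G S2"
  proof -
    fix \<omega> \<omega>' assume h: "\<omega> \<in> \<Omega>" "\<omega>' \<in> \<Omega>" "f i \<omega> = f i \<omega>'" "\<omega> \<in> G S2"
    show "\<omega>' \<in> G S2" unfolding G_def
    proof (clarsimp simp: h(2))
      fix j assume "j \<in> S2" "\<omega>' \<in> A j"
      then have "j < i" "j \<notin> \<Gamma> i" using less.prems S2_def by auto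
      then have "\<omega> \<in> A j" using sat[of j i \<omega>' \<omega>] h \<open>\<omega>' \<in> A j\<close> by auto
      then show False using h(4) \<open>j \<in> S2\<close> unfolding G_def by auto
    qed
  qed
  have num: "real (card (A i \<inter> G S2)) \<le> p i * real (card (G S2))"
    by (rule card_sat_bound[OF fin G_sub satG fib])
  have GS: "G S = G S2 - (\<Union>j\<in>S1. A j \<inter> G S2)"
    unfolding G_def S1_def S2_def by auto
  have sub1: "(\<Union>j\<in>S1. A j \<inter> G S2) \<subseteq> G S2" by auto
  have cardGS: "real (card (G S)) \<ge> real (card (G S2)) - (\<Sum>j\<in>S1. real (card (A j \<inter> G S2)))"
  proof -
    have "card (G S) = card (G S2) - card (\<Union>j\<in>S1. A j \<inter> G S2)"
      using GS card_Diff_subset[OF finite_subset[OF sub1 finG] sub1] by simp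
    moreover have "card (\<Union>j\<in>S1. A j \<inter> G S2) \<le> card (G S2)"
      by (rule card_mono[OF finG sub1])
    ultimately have "real (card (G S)) = real (card (G S2)) - real (card (\<Union>j\<in>S1. A j \<inter> G S2))"
      by simp
    moreover have "card (\<Union>j\<in>S1. A j \<inter> G S2) \<le> (\<Sum>j\<in>S1. card (A j \<inter> G S2))"
      by (rule card_UN_le[OF S1fin])
    hence "real (card (\<Union>j\<in>S1. A j \<inter> G S2)) \<le> (\<Sum>j\<in>S1. real (card (A j \<inter> G S2)))"
      by (metis of_nat_le_iff of_nat_sum)
    ultimately show ?thesis by linarith
  qed
  show ?case
  proof (cases "S1 = {}")
    case True
    then have "S2 = S" unfolding S1_def S2_def by auto
    then have "real (card (A i \<inter> G S)) \<le> p i * real (card (G S))" using num by simp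
    also have "\<dots> \<le> x i * real (card (G S))"
    proof -
      have "x i * (1 - (\<Sum>j\<in>\<Gamma> i. x j)) \<le> x i"
        using xnn[of i] sum_nonneg[of "\<Gamma> i" x] xnn by (simp add: mult_left_le)
      then have "p i \<le> x i" using px[of i] by linarith
      then show ?thesis by (simp add: mult_right_mono)
    qed
    finally show ?thesis .
  next
    case False
    have ltcard: "card S2 < card S"
    proof -
      obtain j where "j \<in> S1" using False by auto
      then have "j \<in> S" "j \<notin> S2" unfolding S1_def S2_def by auto
      then have "S2 \<subset> S" using S2sub by blast
      then show ?thesis using finS by (rule psubset_card_mono[rotated])
    qed
    have IH: "\<And>j. j \<in> S1 \<Longrightarrow> real (card (A j \<inter> G S2)) \<le> x j * real (card (G S2))"
    proof -
      fix j assume j: "j \<in> S1"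
      have "S2 \<subseteq> {..<j}"
      proof
        fix j' assume "j' \<in> S2"
        then have "j' < i" "j' \<notin> \<Gamma> i" using less.prems S2_def by auto
        moreover have "j \<in> \<Gamma> i" using j S1_def by auto
        ultimately show "j' \<in> {..<j}" using comp by auto
      qed
      then show "real (card (A j \<inter> G S2)) \<le> x j * real (card (G S2))"
        using less.hyps[OF ltcard] by blast
    qed
    have "(\<Sum>j\<in>S1. real (card (A j \<inter> G S2))) \<le> (\<Sum>j\<in>S1. x j * real (card (G S2)))"
      by (rule sum_mono) (rule IH)
    also have "\<dots> = (\<Sum>j\<in>S1. x j) * real (card (G S2))" by (simp add: sum_distrib_right)
    also have "\<dots> \<le> (\<Sum>j\<in>\<Gamma> i. x j) * real (card (G S2))"
    proof (rule mult_right_mono)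
      have "S1 \<subseteq> \<Gamma> i" unfolding S1_def by auto
      moreover have "finite (\<Gamma> i)" using \<Gamma>sub finite_subset by blast
      ultimately show "(\<Sum>j\<in>S1. x j) \<le> (\<Sum>j\<in>\<Gamma> i. x j)"
        using xnn by (intro sum_mono2) auto
    qed simp
    finally have "real (card (G S)) \<ge> (1 - (\<Sum>j\<in>\<Gamma> i. x j)) * real (card (G S2))"
      using cardGS by (simp add: algebra_simps)
    moreover have "real (card (A i \<inter> G S)) \<le> real (card (A i \<inter> G S2))"
    proof -
      have "G S \<subseteq> G S2" unfolding G_def S2_def by auto
      then show ?thesis by (intro of_nat_mono card_mono) (auto intro: finite_subset[OF _ finG])
    qed
    moreover have "p i * real (card (G S2)) \<le> x i * ((1 - (\<Sum>j\<in>\<Gamma> i. x j)) * real (card (G S2)))"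
      using px[of i] by (simp add: mult_right_mono mult.assoc[symmetric])
    moreover have "x i * ((1 - (\<Sum>j\<in>\<Gamma> i. x j)) * real (card (G S2))) \<le> x i * real (card (G S))"
      using calculation(1) xnn[of i] by (rule mult_left_mono)
    ultimately show ?thesis using num by linarith
  qed
qed

lemma final: "(\<Prod>j<N. 1 - x j) * real (card \<Omega>) \<le> real (card (G {..<N}))"
proof (induction N)
  case 0
  then show ?case by (simp add: G_def)
next
  case (Suc N)
  have eq: "G {..<Suc N} = G {..<N} - (A N \<inter> G {..<N})" unfolding G_def
    by (auto simp: lessThan_Suc)
  have c: "real (card (G {..<Suc N})) = real (card (G {..<N})) - real (card (A N \<inter> G {..<N}))"
  proof -
    have "card (G {..<Suc N}) = card (G {..<N}) - card (A N \<inter> G {..<N})"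
      using eq card_Diff_subset[of "A N \<inter> G {..<N}" "G {..<N}"] finG by (metis Int_lower2 finite_Int)
    moreover have "card (A N \<inter> G {..<N}) \<le> card (G {..<N})" by (intro card_mono finG) auto
    ultimately show ?thesis by simp
  qed
  have cl: "real (card (A N \<inter> G {..<N})) \<le> x N * real (card (G {..<N}))"
    by (rule claim) auto
  have x1: "x N \<le> 1" by (rule x1)
  have "(\<Prod>j<Suc N. 1 - x j) * real (card \<Omega>) = (1 - x N) * ((\<Prod>j<N. 1 - x j) * real (card \<Omega>))"
    by (simp add: algebra_simps)
  also have "\<dots> \<le> (1 - x N) * real (card (G {..<N}))"
    using Suc.IH x1 by (intro mult_left_mono) auto
  also have "\<dots> \<le> real (card (G {..<Suc N}))" using c cl by (simp add: algebra_simps)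
  finally show ?case .
qed

end


lemma band_count:
  fixes y dl :: "nat \<Rightarrow> real" and R :: nat and t :: real
  assumes R: "R > 0" and t0: "t > 0" and t4: "t \<le> 1/4"
    and slope1: "\<And>i j. i \<le> j \<Longrightarrow> j < R \<Longrightarrow> real (j - i) * dl i \<le> y j - y i"
    and slope2: "\<And>i j. i \<le> j \<Longrightarrow> j < R \<Longrightarrow> y j - y i \<le> real (j - i) * dl j"
    and dlmono: "\<And>i j. i \<le> j \<Longrightarrow> dl i \<le> dl j"
    and dl0: "dl 0 > 0"
  shows "real (card {i. i < R \<and> (\<exists>z::int. \<bar>y i - z\<bar> < t)})
           \<le> 4 * t * R + 2 * (y (R - 1) - y 0 + 5) + 4 * t / dl 0"
proof -
  have dlpos: "\<And>i. dl i > 0" using dlmono[of 0] dl0 by (meson less_le_trans zero_le)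
  have ymono: "\<And>i j. i \<le> j \<Longrightarrow> j < R \<Longrightarrow> y i \<le> y j"
  proof -
    fix i j :: nat assume "i \<le> j" "j < R"
    then have "0 \<le> real (j - i) * dl i" using dlpos[of i] by simp
    then show "y i \<le> y j" using slope1[OF \<open>i \<le> j\<close> \<open>j < R\<close>] by linarith
  qed
  define B where "B z = {i. i < R \<and> \<bar>y i - of_int z\<bar> < t}" for z :: int
  define W where "W z = {i. i < R \<and> of_int z - 1 + t \<le> y i \<and> y i \<le> of_int z - t}" for z :: int
  define Zs where "Zs = {\<lfloor>y 0\<rfloor> - 1 .. \<lceil>y (R - 1)\<rceil> + 1}"
  have finZ: "finite Zs" unfolding Zs_def by simp
  have finB: "\<And>z. finite (B z)" unfolding B_def by simp
  have finW: "\<And>z. finite (W z)" unfolding W_def by simp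
  have badsub: "{i. i < R \<and> (\<exists>z::int. \<bar>y i - z\<bar> < t)} \<subseteq> (\<Union>z\<in>Zs. B z)"
  proof
    fix i assume "i \<in> {i. i < R \<and> (\<exists>z::int. \<bar>y i - z\<bar> < t)}"
    then obtain z :: int where i: "i < R" "\<bar>y i - z\<bar> < t" by auto
    have "y 0 \<le> y i" "y i \<le> y (R - 1)" using ymono i(1) by auto
    then have "z \<in> Zs" unfolding Zs_def using i(2) t4
      by (auto simp: abs_less_iff) (linarith+)
    then show "i \<in> (\<Union>z\<in>Zs. B z)" unfolding B_def using i by auto
  qed
  have c1: "real (card {i. i < R \<and> (\<exists>z::int. \<bar>y i - z\<bar> < t)}) \<le> (\<Sum>z\<in>Zs. real (card (B z)))"
  proof -
    have "card {i. i < R \<and> (\<exists>z::int. \<bar>y i - z\<bar> < t)} \<le> card (\<Union>z\<in>Zs. B z)"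
      by (rule card_mono) (use finZ finB badsub in auto)
    also have "\<dots> \<le> (\<Sum>z\<in>Zs. card (B z))" by (rule card_UN_le[OF finZ])
    finally have "real (card {i. i < R \<and> (\<exists>z::int. \<bar>y i - z\<bar> < t)}) \<le> real (\<Sum>z\<in>Zs. card (B z))"
      by (simp only: of_nat_le_iff)
    then show ?thesis by simp
  qed
  have Wdisj: "\<And>z z'. z \<noteq> z' \<Longrightarrow> W z \<inter> W z' = {}"
  proof -
    fix z z' :: int assume "z \<noteq> z'"
    then have "z < z' \<or> z' < z" by auto
    then show "W z \<inter> W z' = {}"
    proof
      assume "z < z'" then have "of_int z + 1 \<le> (of_int z' :: real)" by linarith
      then show ?thesis unfolding W_def using t0 by auto
    next
      assume "z' < z" then have "of_int z' + 1 \<le> (of_int z :: real)" by linarith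
      then show ?thesis unfolding W_def using t0 by auto
    qed
  qed
  have sumW: "(\<Sum>z\<in>Zs. real (card (W z))) \<le> real R"
  proof -
    have "(\<Sum>z\<in>Zs. card (W z)) = card (\<Union>z\<in>Zs. W z)"
      by (rule card_UN_disjoint[symmetric]) (use finZ finW Wdisj in auto)
    also have "\<dots> \<le> card {..<R}" by (rule card_mono) (auto simp: W_def)
    finally have "(\<Sum>z\<in>Zs. card (W z)) \<le> R" by simp
    then have "real (\<Sum>z\<in>Zs. card (W z)) \<le> real R" by (simp only: of_nat_le_iff)
    then show ?thesis by simp
  qed
  define E where "E z = (if z = \<lfloor>y 0\<rfloor> \<or> z = \<lfloor>y 0\<rfloor> + 1 then 2 * t / dl 0 else 0)" for z :: int
  have perz: "real (card (B z)) \<le> 4 * t * (real (card (W z)) + 1) + 1 + E z" for z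
  proof (cases "B z = {}")
    case True
    then show ?thesis using t0 dl0 by (simp add: E_def)
  next
    case False
    define lo where "lo = Min (B z)"
    have lo: "lo \<in> B z" "\<And>i. i \<in> B z \<Longrightarrow> lo \<le> i" using False finB lo_def by auto
    have loR: "lo < R" and loz: "\<bar>y lo - of_int z\<bar> < t" using lo(1) unfolding B_def by auto
    have cb: "real (card (B z)) \<le> 2 * t / dl lo + 1"
    proof -
      define m where "m = nat \<lfloor>2 * t / dl lo\<rfloor>"
      have sub: "B z \<subseteq> {lo..lo + m}"
      proof
        fix i assume i: "i \<in> B z"
        then have "lo \<le> i" "i < R" "\<bar>y i - of_int z\<bar> < t" using lo(2) unfolding B_def by auto
        then have "real (i - lo) * dl lo \<le> y i - y lo" using slope1 by auto
        also have "\<dots> < 2 * t" using \<open>\<bar>y i - of_int z\<bar> < t\<close> loz by (auto simp: abs_less_iff)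
        finally have "real (i - lo) < 2 * t / dl lo" using dlpos[of lo] by (simp add: field_simps)
        then have "i - lo \<le> m" unfolding m_def by linarith
        then show "i \<in> {lo..lo + m}" using \<open>lo \<le> i\<close> by auto
      qed
      have "card (B z) \<le> card {lo..lo + m}" by (rule card_mono) (use sub in auto)
      then have "real (card (B z)) \<le> real m + 1" by simp
      also have "real m \<le> 2 * t / dl lo" unfolding m_def using t0 dlpos[of lo]
        by (simp add: of_nat_nat)
      finally show ?thesis by simp
    qed
    show ?thesis
    proof (cases "z = \<lfloor>y 0\<rfloor> \<or> z = \<lfloor>y 0\<rfloor> + 1")
      case True
      have "2 * t / dl lo \<le> 2 * t / dl 0"
        using dlmono[of 0 lo] dl0 t0 by (intro divide_left_mono) auto
      moreover have "0 \<le> 4 * t * (real (card (W z)) + 1)" using t0 by simp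
      ultimately show ?thesis using cb True by (simp add: E_def)
    next
      case False
      have "y 0 \<le> y lo" using ymono loR by auto
      then have "of_int z > y 0 - t" using loz by (auto simp: abs_less_iff)
      then have "of_int z > y 0 - 1" using t4 by linarith
      then have "z \<ge> \<lfloor>y 0\<rfloor>" by linarith
      then have "z \<ge> \<lfloor>y 0\<rfloor> + 2" using False by auto
      then have gap: "y 0 < of_int z - 1 + t" using t0 by linarith
      define j where "j = (LEAST i. of_int z - 1 + t \<le> y i)"
      have lo_ok: "of_int z - 1 + t \<le> y lo" using loz t4 by (auto simp: abs_less_iff)
      have jle: "j \<le> lo" unfolding j_def using lo_ok by (rule Least_le)
      have jprop: "of_int z - 1 + t \<le> y j" unfolding j_def using lo_ok by (rule LeastI)
      have j0: "j \<noteq> 0"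
      proof
        assume "j = 0" then show False using jprop gap by simp
      qed
      have jm1: "y (j - 1) < of_int z - 1 + t"
      proof -
        have "\<not> (of_int z - 1 + t \<le> y (j - 1))"
          using not_less_Least[of "j - 1" "\<lambda>i. of_int z - 1 + t \<le> y i"] j0 unfolding j_def by auto
        then show ?thesis by simp
      qed
      have Wsup: "{j..<lo} \<subseteq> W z"
      proof
        fix i assume i: "i \<in> {j..<lo}"
        then have iR: "i < R" using loR by auto
        have "y j \<le> y i" using ymono i iR by auto
        moreover have "i \<notin> B z" using lo(2) i by force
        moreover have "y i \<le> y lo" using ymono i loR by auto
        ultimately show "i \<in> W z" unfolding W_def B_def using jprop iR loz
          by (auto simp: abs_less_iff)
      qed
      have cW: "real (lo - j) \<le> real (card (W z))"
      proof -
        have "card {j..<lo} \<le> card (W z)" by (rule card_mono[OF finW Wsup])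
        then show ?thesis by simp
      qed
      have "y lo - y (j - 1) \<le> real (lo - (j - 1)) * dl lo" using slope2[of "j - 1" lo] jle loR by auto
      moreover have "y lo - y (j - 1) > 1 / 2" using loz jm1 t4 by (auto simp: abs_less_iff)
      moreover have "real (lo - (j - 1)) = real (lo - j) + 1" using jle j0 by auto
      ultimately have "1 / 2 < (real (lo - j) + 1) * dl lo" by (metis less_le_trans)
      then have "1 / dl lo < 2 * (real (lo - j) + 1)" using dlpos[of lo] by (simp add: field_simps)
      then have "2 * t / dl lo \<le> 4 * t * (real (lo - j) + 1)" using t0
      proof -
        have "2 * t / dl lo = 2 * t * (1 / dl lo)" by simp
        also have "\<dots> \<le> 2 * t * (2 * (real (lo - j) + 1))"
          using \<open>1 / dl lo < 2 * (real (lo - j) + 1)\<close> t0 by (intro mult_left_mono) auto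
        finally show ?thesis by (simp add: algebra_simps)
      qed
      also have "\<dots> \<le> 4 * t * (real (card (W z)) + 1)" using cW t0 by simp
      finally show ?thesis using cb False by (simp add: E_def)
    qed
  qed
  have sumE: "(\<Sum>z\<in>Zs. E z) \<le> 4 * t / dl 0"
  proof -
    let ?P = "{\<lfloor>y 0\<rfloor>, \<lfloor>y 0\<rfloor> + 1}"
    have "(\<Sum>z\<in>Zs. E z) = (\<Sum>z\<in>Zs \<inter> ?P. E z)"
      by (rule sum.mono_neutral_right) (use finZ in \<open>auto simp: E_def\<close>)
    also have "\<dots> \<le> (\<Sum>z\<in>?P. E z)"
      by (rule sum_mono2) (use t0 dl0 in \<open>auto simp: E_def\<close>)
    finally have "(\<Sum>z\<in>Zs. E z) \<le> (\<Sum>z\<in>?P. E z)" .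
    also have "\<dots> = 4 * t / dl 0" by (simp add: E_def)
    finally show ?thesis .
  qed
  have cardZ: "real (card Zs) \<le> y (R - 1) - y 0 + 5"
  proof -
    have "y 0 \<le> y (R - 1)" using ymono R by auto
    then have "\<lfloor>y 0\<rfloor> - 1 \<le> \<lceil>y (R - 1)\<rceil> + 1" by linarith
    then have "real (card Zs) = real_of_int (\<lceil>y (R - 1)\<rceil> + 1 - (\<lfloor>y 0\<rfloor> - 1) + 1)"
      unfolding Zs_def by simp
    then show ?thesis by linarith
  qed
  have "(\<Sum>z\<in>Zs. real (card (B z))) \<le> (\<Sum>z\<in>Zs. 4 * t * (real (card (W z)) + 1) + 1 + E z)"
    by (rule sum_mono) (rule perz)
  also have "\<dots> = 4 * t * (\<Sum>z\<in>Zs. real (card (W z))) + (4 * t + 1) * real (card Zs) + (\<Sum>z\<in>Zs. E z)"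
    by (simp add: sum.distrib sum_distrib_left algebra_simps)
  also have "\<dots> \<le> 4 * t * real R + 2 * (y (R - 1) - y 0 + 5) + 4 * t / dl 0"
  proof -
    have "4 * t * (\<Sum>z\<in>Zs. real (card (W z))) \<le> 4 * t * real R" using sumW t0 by simp
    moreover have "(4 * t + 1) * real (card Zs) \<le> 2 * (y (R - 1) - y 0 + 5)"
    proof -
      have "(4 * t + 1) * real (card Zs) \<le> 2 * real (card Zs)" using t4 by (intro mult_right_mono) auto
      moreover have "2 * real (card Zs) \<le> 2 * (y (R - 1) - y 0 + 5)" using cardZ by simp
      ultimately show ?thesis by (rule order_trans)
    qed
    ultimately show ?thesis using sumE by linarith
  qed
  finally show ?thesis using c1 by linarith
qed


definition gg :: "real \<Rightarrow> (nat \<Rightarrow> real) \<Rightarrow> nat \<Rightarrow> real \<Rightarrow> real" where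
  "gg \<xi> \<eta> n e = \<xi> * (1 + e) ^ n + \<eta> n"
definition DD :: "real \<Rightarrow> nat \<Rightarrow> real \<Rightarrow> real" where
  "DD \<xi> n e = \<xi> * real n * (1 + e) ^ (n - 1)"
definition bnd :: "real \<Rightarrow> (nat \<Rightarrow> real) \<Rightarrow> real \<Rightarrow> real \<Rightarrow> nat \<Rightarrow> real" where
  "bnd \<xi> \<eta> A0 \<tau> n = (if \<exists>e\<in>{A0..2*A0}. \<exists>z::int. \<bar>gg \<xi> \<eta> n e - z\<bar> < 2 * \<tau>
      then 9 * \<tau> + 8 * \<tau> / (A0 * DD \<xi> n A0) else 0)"

lemma DD_mono:
  assumes "\<xi> \<ge> 0" "0 \<le> x" "x \<le> y" shows "DD \<xi> n x \<le> DD \<xi> n y"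
  unfolding DD_def using assms by (intro mult_left_mono power_mono) auto

lemma DD_mono_n:
  assumes "\<xi> \<ge> 0" "0 \<le> x" "n \<le> n'" shows "DD \<xi> n x \<le> DD \<xi> n' x"
proof (cases "n = 0")
  case True then show ?thesis using assms by (simp add: DD_def)
next
  case False
  have "(1 + x) ^ (n - 1) \<le> (1 + x) ^ (n' - 1)" using assms by (intro power_increasing) auto
  then have "real n * (1 + x) ^ (n - 1) \<le> real n' * (1 + x) ^ (n' - 1)"
    using assms by (intro mult_mono) auto
  then show ?thesis unfolding DD_def using assms by (simp add: mult.assoc mult_left_mono)
qed

lemma DD_nonneg: "\<xi> \<ge> 0 \<Longrightarrow> 0 \<le> x \<Longrightarrow> 0 \<le> DD \<xi> n x"
  unfolding DD_def by simp

lemma DD_pos: "\<xi> > 0 \<Longrightarrow> 0 \<le> x \<Longrightarrow> n \<ge> 1 \<Longrightarrow> 0 < DD \<xi> n x"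
  unfolding DD_def by simp

lemma gg_diff:
  assumes "\<xi> \<ge> 0" "0 \<le> x" "x \<le> y"
  shows "(y - x) * DD \<xi> n x \<le> gg \<xi> \<eta> n y - gg \<xi> \<eta> n x"
    and "gg \<xi> \<eta> n y - gg \<xi> \<eta> n x \<le> (y - x) * DD \<xi> n y"
proof -
  have a: "real n * ((1 + y) - (1 + x)) * (1 + x) ^ (n - 1) \<le> (1 + y) ^ n - (1 + x) ^ n"
    using pow_diff_bounds(1)[of "1 + x" "1 + y" n] assms by auto
  have b: "(1 + y) ^ n - (1 + x) ^ n \<le> real n * ((1 + y) - (1 + x)) * (1 + y) ^ (n - 1)"
    using pow_diff_bounds(2)[of "1 + x" "1 + y" n] assms by auto
  have e: "gg \<xi> \<eta> n y - gg \<xi> \<eta> n x = \<xi> * ((1 + y) ^ n - (1 + x) ^ n)"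
    unfolding gg_def by (simp add: algebra_simps)
  show "(y - x) * DD \<xi> n x \<le> gg \<xi> \<eta> n y - gg \<xi> \<eta> n x"
    unfolding e DD_def using mult_left_mono[OF a assms(1)] by (simp add: algebra_simps)
  show "gg \<xi> \<eta> n y - gg \<xi> \<eta> n x \<le> (y - x) * DD \<xi> n y"
    unfolding e DD_def using mult_left_mono[OF b assms(1)] by (simp add: algebra_simps)
qed

lemma least_agree:
  fixes P Q :: "nat \<Rightarrow> bool"
  assumes "\<And>k. k \<le> m \<Longrightarrow> P k \<longleftrightarrow> Q k" "P m"
  shows "(LEAST k. P k) = (LEAST k. Q k)"
proof -
  have le: "(LEAST k. P k) \<le> m" using assms(2) by (rule Least_le)
  have P: "P (LEAST k. P k)" using assms(2) by (rule LeastI)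
  show ?thesis
  proof (rule Least_equality[symmetric])
    show "Q (LEAST k. P k)" using assms(1)[OF le] P by simp
    fix y assume "Q y"
    show "(LEAST k. P k) \<le> y"
    proof (rule ccontr)
      assume "\<not> (LEAST k. P k) \<le> y"
      then have "y < (LEAST k. P k)" by simp
      then have "\<not> P y" by (rule not_less_Least)
      moreover have "y \<le> m" using \<open>y < (LEAST k. P k)\<close> le by simp
      ultimately show False using assms(1) \<open>Q y\<close> by auto
    qed
  qed
qed

locale scale =
  fixes \<xi> A0 \<tau> :: real and \<eta> :: "nat \<Rightarrow> real" and N Nst d F0 E :: nat
  assumes xi: "\<xi> > 0" and A0: "0 < A0" "A0 \<le> 1"
    and tau: "0 < \<tau>" "\<tau> \<le> 1/64"
    and nonroot_amp: "\<And>n. Nst < n \<Longrightarrow> 16 \<le> \<xi> * (1 + A0) ^ (n - 1)"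
    and nonroot_lin: "\<And>n. Nst < n \<Longrightarrow> 1 \<le> A0 * \<xi> * real n"
    and dcond: "8 \<le> \<tau> * (1 + A0) ^ d"
    and dsmall: "34 * \<tau> * real d \<le> 1/4"
    and F0cond: "\<And>n. n \<le> N \<Longrightarrow> A0 / 2 ^ F0 * DD \<xi> n (2 * A0) \<le> \<tau>"
    and Econd: "26 \<le> \<tau> * 2 ^ E"
    and Fcond: "2 * (A0 * DD \<xi> N (2 * A0) + 5) \<le> \<tau> * 2 ^ (F0 + E)"
    and roots: "(\<Sum>n\<in>{1..Nst}. bnd \<xi> \<eta> A0 \<tau> n) \<le> 1/8"
begin

abbreviation "g \<equiv> gg \<xi> \<eta>"
abbreviation "D \<equiv> DD \<xi>"
definition "F = F0 + E"
definition hk :: "nat \<Rightarrow> real" where "hk k = A0 / 2 ^ k"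
definition lft :: "nat \<Rightarrow> nat \<Rightarrow> real" where "lft k c = A0 + real c * hk k"
definition rgt :: "nat \<Rightarrow> nat \<Rightarrow> real" where "rgt k c = A0 + real (c + 1) * hk k"
definition anc :: "nat \<Rightarrow> nat \<Rightarrow> nat" where "anc k \<omega> = \<omega> div 2 ^ (F - k)"
definition "Pf n \<omega> k \<longleftrightarrow> hk k * D n (rgt k (anc k \<omega>)) \<le> \<tau>"
definition "Pc n \<omega> k \<longleftrightarrow> hk k * D n (rgt k (anc k \<omega>)) \<le> 8"
definition "kf n \<omega> = (LEAST k. Pf n \<omega> k)"
definition "kc n \<omega> = (LEAST k. Pc n \<omega> k)"
definition Ev :: "nat \<Rightarrow> nat set" where
  "Ev n = (if n = 0 \<or> N < n then {} else
     {\<omega>. \<omega> < 2 ^ F \<and> (\<exists>e. lft (kf n \<omega>) (anc (kf n \<omega>) \<omega>) \<le> e \<and> e \<le> rgt (kf n \<omega>) (anc (kf n \<omega>) \<omega>)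
           \<and> (\<exists>z::int. \<bar>g n e - z\<bar> < \<tau>))})"
definition "mlev n \<omega> = (if n \<le> Nst then 0 else kc n \<omega>)"
definition ff :: "nat \<Rightarrow> nat \<Rightarrow> nat \<times> nat" where
  "ff n \<omega> = (if n = 0 \<or> N < n then (\<omega>, 0) else (mlev n \<omega>, anc (mlev n \<omega>) \<omega>))"
definition pp :: "nat \<Rightarrow> real" where
  "pp n = (if n = 0 \<or> N < n then 0 else if n \<le> Nst then bnd \<xi> \<eta> A0 \<tau> n else 17 * \<tau>)"
definition xx :: "nat \<Rightarrow> real" where "xx n = 2 * pp n"
definition Gam :: "nat \<Rightarrow> nat set" where
  "Gam n = (if n \<le> Nst + d then {..<n} else {n - d..<n})"
definition Cell :: "nat \<Rightarrow> nat \<Rightarrow> nat set" where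
  "Cell m c = {\<omega>. \<omega> < 2 ^ F \<and> anc m \<omega> = c}"

lemma hk_pos: "hk k > 0" unfolding hk_def using A0 by simp

lemma hk_mult: "k \<le> F \<Longrightarrow> hk k = real (2 ^ (F - k)) * hk F"
proof -
  assume "k \<le> F"
  then have "(2::real) ^ F = 2 ^ k * 2 ^ (F - k)" by (simp add: power_add[symmetric])
  then show ?thesis unfolding hk_def by (simp add: field_simps)
qed

lemma anc_anc: "k \<le> m \<Longrightarrow> m \<le> F \<Longrightarrow> anc k \<omega> = anc m \<omega> div 2 ^ (m - k)"
proof -
  assume "k \<le> m" "m \<le> F"
  then have "(2::nat) ^ (F - k) = 2 ^ (F - m) * 2 ^ (m - k)" by (simp add: power_add[symmetric])
  then show ?thesis unfolding anc_def by (simp add: div_mult2_eq)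
qed

lemma anc_lt: "\<omega> < 2 ^ F \<Longrightarrow> k \<le> F \<Longrightarrow> anc k \<omega> < 2 ^ k"
proof -
  assume "\<omega> < 2 ^ F" "k \<le> F"
  then have "\<omega> < 2 ^ k * 2 ^ (F - k)" by (simp add: power_add[symmetric])
  then show ?thesis unfolding anc_def by (simp add: less_mult_imp_div_less)
qed

lemma anc_0: "\<omega> < 2 ^ F \<Longrightarrow> anc 0 \<omega> = 0"
  unfolding anc_def by simp

lemma lft_ge: "lft k c \<ge> A0" unfolding lft_def using hk_pos[of k] by simp
lemma lft_le_rgt: "lft k c \<le> rgt k c" unfolding lft_def rgt_def using hk_pos[of k] by simp
lemma rgt_minus_lft: "rgt k c - lft k c = hk k" unfolding lft_def rgt_def by (simp add: algebra_simps)

lemma rgt_le: "c < 2 ^ k \<Longrightarrow> rgt k c \<le> 2 * A0"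
proof -
  assume "c < 2 ^ k"
  then have "real (c + 1) \<le> 2 ^ k" by (metis Suc_eq_plus1 Suc_leI of_nat_le_iff of_nat_numeral of_nat_power)
  then have "real (c + 1) * hk k \<le> 2 ^ k * hk k" using hk_pos[of k] by (intro mult_right_mono) auto
  also have "\<dots> = A0" unfolding hk_def by simp
  finally show ?thesis unfolding rgt_def by simp
qed

lemma lftF_in:
  assumes "k \<le> F"
  shows "lft k (anc k \<omega>) \<le> lft F \<omega>" "lft F \<omega> \<le> rgt k (anc k \<omega>)"
proof -
  let ?q = "anc k \<omega>" and ?P = "(2::nat) ^ (F - k)"
  have dm: "\<omega> = ?q * ?P + \<omega> mod ?P" unfolding anc_def by (metis div_mult_mod_eq)
  have r: "\<omega> mod ?P < ?P" by simp
  have w1: "real ?q * real ?P \<le> real \<omega>" using dm by (metis le_add1 of_nat_le_iff of_nat_mult)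
  have w2: "real \<omega> \<le> (real ?q + 1) * real ?P"
  proof -
    have "\<omega> \<le> ?q * ?P + ?P" using dm r by linarith
    then have "real \<omega> \<le> real (?q * ?P + ?P)" by (simp only: of_nat_le_iff)
    then show ?thesis by (simp add: algebra_simps)
  qed
  have hF: "hk k = real ?P * hk F" using hk_mult[OF assms] .
  have "real ?q * hk k \<le> real \<omega> * hk F" using w1 hk_pos[of F] unfolding hF
    by (metis mult.assoc mult_right_mono less_imp_le)
  then show "lft k (anc k \<omega>) \<le> lft F \<omega>" unfolding lft_def by simp
  have "real \<omega> * hk F \<le> (real ?q + 1) * hk k" using w2 hk_pos[of F] unfolding hF
    by (metis mult.assoc mult_right_mono less_imp_le)
  then show "lft F \<omega> \<le> rgt k (anc k \<omega>)" unfolding lft_def rgt_def by (simp add: algebra_simps)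
qed


lemma F0_le_F: "F0 \<le> F" unfolding F_def by simp

lemma Pf_F0: "n \<le> N \<Longrightarrow> \<omega> < 2 ^ F \<Longrightarrow> Pf n \<omega> F0"
proof -
  assume n: "n \<le> N" and w: "\<omega> < 2 ^ F"
  have c: "anc F0 \<omega> < 2 ^ F0" using anc_lt[OF w F0_le_F] .
  have "D n (rgt F0 (anc F0 \<omega>)) \<le> D n (2 * A0)"
    using rgt_le[OF c] lft_ge[of F0 "anc F0 \<omega>"] lft_le_rgt[of F0 "anc F0 \<omega>"] A0 xi
    by (intro DD_mono) auto
  then have "hk F0 * D n (rgt F0 (anc F0 \<omega>)) \<le> hk F0 * D n (2 * A0)"
    using hk_pos[of F0] by (intro mult_left_mono) auto
  also have "\<dots> \<le> \<tau>" using F0cond[OF n] unfolding hk_def by simp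
  finally show ?thesis unfolding Pf_def .
qed

lemma kf_prop: "n \<le> N \<Longrightarrow> \<omega> < 2 ^ F \<Longrightarrow> Pf n \<omega> (kf n \<omega>) \<and> kf n \<omega> \<le> F0"
  using Pf_F0 unfolding kf_def by (meson LeastI Least_le)

lemma Pf_Pc: "Pf n \<omega> k \<Longrightarrow> Pc n \<omega> k"
  unfolding Pf_def Pc_def using tau by auto

lemma kc_prop: "n \<le> N \<Longrightarrow> \<omega> < 2 ^ F \<Longrightarrow> Pc n \<omega> (kc n \<omega>) \<and> kc n \<omega> \<le> kf n \<omega>"
proof -
  assume a: "n \<le> N" "\<omega> < 2 ^ F"
  have "Pc n \<omega> (kf n \<omega>)" using kf_prop[OF a] Pf_Pc by blast
  then show ?thesis unfolding kc_def by (meson LeastI Least_le)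
qed

lemma Ev_sample:
  assumes "\<omega> \<in> Ev n"
  shows "\<omega> < 2 ^ F" "\<exists>z::int. \<bar>g n (lft F \<omega>) - z\<bar> < 2 * \<tau>"
proof -
  have n: "n \<noteq> 0" "n \<le> N" using assms unfolding Ev_def by (auto split: if_splits)
  show w: "\<omega> < 2 ^ F" using assms unfolding Ev_def by (auto split: if_splits)
  let ?k = "kf n \<omega>"
  let ?c = "anc ?k \<omega>"
  obtain e z where e: "lft ?k ?c \<le> e" "e \<le> rgt ?k ?c" and z: "\<bar>g n e - of_int z\<bar> < \<tau>"
    using assms n unfolding Ev_def by auto
  have kF: "?k \<le> F" using kf_prop[OF n(2) w] F0_le_F by linarith
  have Pf: "hk ?k * D n (rgt ?k ?c) \<le> \<tau>" using kf_prop[OF n(2) w] unfolding Pf_def by simp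
  have x1: "lft ?k ?c \<le> lft F \<omega>" "lft F \<omega> \<le> rgt ?k ?c" using lftF_in[OF kF] by auto
  have A0pos: "0 \<le> lft ?k ?c" using lft_ge[of ?k ?c] A0 by linarith
  have diff: "\<bar>g n (lft F \<omega>) - g n e\<bar> \<le> \<tau>"
  proof (cases "lft F \<omega> \<le> e")
    case True
    have "g n e - g n (lft F \<omega>) \<le> (e - lft F \<omega>) * D n e"
      using gg_diff(2)[where x="lft F \<omega>" and y=e and n=n and \<eta>=\<eta>] True xi A0pos x1 by auto
    also have "\<dots> \<le> hk ?k * D n (rgt ?k ?c)"
    proof (rule mult_mono)
      show "e - lft F \<omega> \<le> hk ?k" using rgt_minus_lft[of ?k ?c] x1 e by linarith
      show "D n e \<le> D n (rgt ?k ?c)" using e xi A0pos x1 by (intro DD_mono) auto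
    qed (use hk_pos[THEN less_imp_le] True xi A0pos x1 DD_nonneg in auto)
    finally have "g n e - g n (lft F \<omega>) \<le> \<tau>" using Pf by linarith
    moreover have "g n (lft F \<omega>) \<le> g n e"
      using gg_diff(1)[where x="lft F \<omega>" and y=e and n=n and \<eta>=\<eta>] True xi A0pos x1 DD_nonneg[of \<xi> "lft F \<omega>" n]
      by (smt (verit) mult_nonneg_nonneg)
    ultimately show ?thesis by linarith
  next
    case False
    have "g n (lft F \<omega>) - g n e \<le> (lft F \<omega> - e) * D n (lft F \<omega>)"
      using gg_diff(2)[where x=e and y="lft F \<omega>" and n=n and \<eta>=\<eta>] False xi A0pos e by auto
    also have "\<dots> \<le> hk ?k * D n (rgt ?k ?c)"
    proof (rule mult_mono)
      show "lft F \<omega> - e \<le> hk ?k" using rgt_minus_lft[of ?k ?c] x1 e by linarith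
      show "D n (lft F \<omega>) \<le> D n (rgt ?k ?c)" using e xi A0pos x1 by (intro DD_mono) auto
    qed (use hk_pos[THEN less_imp_le] False xi A0pos x1 DD_nonneg in auto)
    finally have "g n (lft F \<omega>) - g n e \<le> \<tau>" using Pf by linarith
    moreover have "g n e \<le> g n (lft F \<omega>)"
      using gg_diff(1)[where x=e and y="lft F \<omega>" and n=n and \<eta>=\<eta>] False xi A0pos e DD_nonneg[of \<xi> e n]
      by (smt (verit) mult_nonneg_nonneg)
    ultimately show ?thesis by linarith
  qed
  show "\<exists>z::int. \<bar>g n (lft F \<omega>) - z\<bar> < 2 * \<tau>"
    using diff z by (intro exI[of _ z]) linarith
qed


lemma lftF_cell:
  assumes "m \<le> F" "anc m \<omega> = c"
  shows "lft F \<omega> = lft m c + real (\<omega> mod 2 ^ (F - m)) * hk F"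
proof -
  let ?R = "(2::nat) ^ (F - m)"
  have dm: "\<omega> = c * ?R + \<omega> mod ?R" using assms(2) unfolding anc_def by (metis div_mult_mod_eq)
  have "real \<omega> * hk F = real c * (real ?R * hk F) + real (\<omega> mod ?R) * hk F"
    by (subst dm) (simp add: algebra_simps)
  then show ?thesis unfolding lft_def using hk_mult[OF assms(1)] by simp
qed

lemma cell_count:
  assumes n: "1 \<le> n" "n \<le> N" and m: "m \<le> F"
  shows "real (card (Ev n \<inter> Cell m c)) \<le>
    (if \<exists>t<2 ^ (F - m). \<exists>z::int. \<bar>g n (lft m c + real t * hk F) - z\<bar> < 2 * \<tau>
     then 8 * \<tau> * 2 ^ (F - m) + 2 * (hk m * D n (rgt m c) + 5) + 8 * \<tau> / (hk F * D n (lft m c))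
     else 0)"
proof -
  define R where "R = (2::nat) ^ (F - m)"
  define y where "y t = g n (lft m c + real t * hk F)" for t :: nat
  define dl where "dl t = hk F * D n (lft m c + real t * hk F)" for t :: nat
  define B where "B = {t. t < R \<and> (\<exists>z::int. \<bar>y t - z\<bar> < 2 * \<tau>)}"
  have sub: "Ev n \<inter> Cell m c \<subseteq> (\<lambda>t. c * R + t) ` B"
  proof
    fix \<omega> assume w: "\<omega> \<in> Ev n \<inter> Cell m c"
    then have wl: "\<omega> < 2 ^ F" "anc m \<omega> = c" unfolding Cell_def by auto
    have dm: "\<omega> = c * R + \<omega> mod R" using wl(2) unfolding anc_def R_def by (metis div_mult_mod_eq)
    have "lft F \<omega> = lft m c + real (\<omega> mod R) * hk F" using lftF_cell[OF m wl(2)] R_def by simp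
    then have "\<omega> mod R \<in> B" using Ev_sample(2)[of \<omega> n] w unfolding B_def y_def R_def by auto
    then show "\<omega> \<in> (\<lambda>t. c * R + t) ` B" using dm by (metis image_eqI)
  qed
  have finB: "finite B" unfolding B_def by simp
  have c1: "card (Ev n \<inter> Cell m c) \<le> card B"
    using card_mono[OF finite_imageI[OF finB] sub] card_image_le[OF finB, of "\<lambda>t. c * R + t"] by linarith
  have hFpos: "hk F > 0" by (rule hk_pos)
  have lpos: "0 \<le> lft m c" using lft_ge[of m c] A0 by linarith
  show ?thesis
  proof (cases "B = {}")
    case True
    then have "card (Ev n \<inter> Cell m c) = 0" using c1 by simp
    moreover have "\<not> (\<exists>t<2 ^ (F - m). \<exists>z::int. \<bar>g n (lft m c + real t * hk F) - z\<bar> < 2 * \<tau>)"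
      using True unfolding B_def y_def R_def by auto
    ultimately show ?thesis by (simp only: if_False of_nat_0 order_refl)
  next
    case False
    have cond: "\<exists>t<2 ^ (F - m). \<exists>z::int. \<bar>g n (lft m c + real t * hk F) - z\<bar> < 2 * \<tau>"
      using False unfolding B_def y_def R_def by auto
    have R0: "R > 0" unfolding R_def by simp
    have xs: "lft m c + real j * hk F - (lft m c + real i * hk F) = real (j - i) * hk F" if "i \<le> j" for i j :: nat
      using that by (simp add: of_nat_diff algebra_simps)
    have xnn: "0 \<le> lft m c + real i * hk F" for i :: nat using lpos hFpos by simp
    have xle: "lft m c + real i * hk F \<le> lft m c + real j * hk F" if "i \<le> j" for i j :: nat
      using that hFpos by (simp add: mult_right_mono)
    have bc: "real (card B) \<le> 4 * (2 * \<tau>) * real R + 2 * (y (R - 1) - y 0 + 5) + 4 * (2 * \<tau>) / dl 0"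
      unfolding B_def
    proof (rule band_count)
      show "0 < R" by (rule R0)
      show "0 < 2 * \<tau>" using tau by simp
      show "2 * \<tau> \<le> 1 / 4" using tau by simp
      fix i j :: nat assume ij: "i \<le> j"
      show "real (j - i) * dl i \<le> y j - y i"
        using gg_diff(1)[where x="lft m c + real i * hk F" and y="lft m c + real j * hk F" and n=n and \<eta>=\<eta>]
          xi xnn[of i] xle[OF ij] xs[OF ij] unfolding y_def dl_def by (simp add: mult.assoc)
      show "y j - y i \<le> real (j - i) * dl j"
        using gg_diff(2)[where x="lft m c + real i * hk F" and y="lft m c + real j * hk F" and n=n and \<eta>=\<eta>]
          xi xnn[of i] xle[OF ij] xs[OF ij] unfolding y_def dl_def by (simp add: mult.assoc)
      show "dl i \<le> dl j" unfolding dl_def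
        using xi xnn[of i] xle[OF ij] hFpos by (intro mult_left_mono DD_mono) auto
    next
      show "0 < dl 0" unfolding dl_def using hFpos DD_pos[of \<xi> "lft m c" n] xi lpos n by simp
    qed
    have yvar: "y (R - 1) - y 0 \<le> hk m * D n (rgt m c)"
    proof -
      have "y (R - 1) - y 0 \<le> real (R - 1 - 0) * dl (R - 1)"
        using gg_diff(2)[where x="lft m c + real 0 * hk F" and y="lft m c + real (R - 1) * hk F" and n=n and \<eta>=\<eta>]
          xi xnn[of 0] xle[of 0 "R - 1"] xs[of 0 "R - 1"] unfolding y_def dl_def by (simp add: mult.assoc)
      also have "\<dots> \<le> hk m * D n (rgt m c)"
      proof -
        have hm: "hk m = real R * hk F" using hk_mult[OF m] R_def by simp
        have a: "real (R - 1) * hk F \<le> hk m" unfolding hm using hFpos R0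
          by (intro mult_right_mono) auto
        have b: "lft m c + real (R - 1) * hk F \<le> rgt m c"
          using a rgt_minus_lft[of m c] by linarith
        have "real (R - 1 - 0) * dl (R - 1) = (real (R - 1) * hk F) * D n (lft m c + real (R - 1) * hk F)"
          unfolding dl_def by simp
        also have "\<dots> \<le> hk m * D n (rgt m c)"
          using a b xi xnn[of "R - 1"] hFpos hk_pos[of m] DD_nonneg[of \<xi> "lft m c + real (R - 1) * hk F" n]
          by (intro mult_mono DD_mono) auto
        finally show ?thesis .
      qed
      finally show ?thesis .
    qed
    have dl0: "dl 0 = hk F * D n (lft m c)" unfolding dl_def by simp
    have "real (card (Ev n \<inter> Cell m c)) \<le> real (card B)" using c1 by simp
    also have "\<dots> \<le> 8 * \<tau> * 2 ^ (F - m) + 2 * (hk m * D n (rgt m c) + 5) + 8 * \<tau> / (hk F * D n (lft m c))"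
      using bc yvar unfolding dl0 R_def by simp
    finally show ?thesis using cond by simp
  qed
qed


lemma DD_ratio:
  assumes "1 \<le> j" "j \<le> i" "A0 \<le> x"
  shows "D j x * (1 + A0) ^ (i - j) \<le> D i x"
proof -
  have x0: "0 \<le> x" using assms A0 by linarith
  have "(1 + A0) ^ (i - j) \<le> (1 + x) ^ (i - j)" using assms A0 by (intro power_mono) auto
  then have "(1 + x) ^ (j - 1) * (1 + A0) ^ (i - j) \<le> (1 + x) ^ (j - 1) * (1 + x) ^ (i - j)"
    using x0 by (intro mult_left_mono) auto
  also have "\<dots> = (1 + x) ^ (i - 1)" using assms by (simp add: power_add[symmetric])
  finally have a: "(1 + x) ^ (j - 1) * (1 + A0) ^ (i - j) \<le> (1 + x) ^ (i - 1)" .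
  have "\<xi> * real j * ((1 + x) ^ (j - 1) * (1 + A0) ^ (i - j)) \<le> \<xi> * real i * (1 + x) ^ (i - 1)"
  proof (rule mult_mono)
    show "0 \<le> (1 + x) ^ (j - 1) * (1 + A0) ^ (i - j)" using x0 A0 by simp
  qed (use a assms xi x0 in auto)
  then show ?thesis unfolding DD_def by (simp add: mult.assoc)
qed

lemma Cell_card: "c < 2 ^ m \<Longrightarrow> m \<le> F \<Longrightarrow> 2 ^ (F - m) \<le> card (Cell m c)"
proof -
  assume c: "c < 2 ^ m" and m: "m \<le> F"
  define R where "R = (2::nat) ^ (F - m)"
  have R0: "R > 0" unfolding R_def by simp
  have FR: "(2::nat) ^ F = 2 ^ m * R" unfolding R_def using m by (simp add: power_add[symmetric])
  have sub: "(\<lambda>t. c * R + t) ` {..<R} \<subseteq> Cell m c"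
  proof
    fix \<omega> assume "\<omega> \<in> (\<lambda>t. c * R + t) ` {..<R}"
    then obtain t where t: "t < R" "\<omega> = c * R + t" by auto
    have "c * R + t < (c + 1) * R" using t by simp
    also have "\<dots> \<le> 2 ^ m * R" using c by (intro mult_right_mono) auto
    finally have "\<omega> < 2 ^ F" using t FR by simp
    moreover have "\<omega> div R = c" using t R0 by simp
    ultimately show "\<omega> \<in> Cell m c" unfolding Cell_def anc_def R_def by simp
  qed
  have "card ((\<lambda>t. c * R + t) ` {..<R}) = R" by (subst card_image) (auto simp: inj_on_def)
  moreover have "finite (Cell m c)" unfolding Cell_def by simp
  ultimately show ?thesis using card_mono[OF _ sub] R_def by metis
qed

lemma nonroot_cell_lb:
  assumes i: "Nst < i" "i \<le> N" and w: "\<omega> < 2 ^ F"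
  shows "1 \<le> hk (kc i \<omega>) * D i (lft (kc i \<omega>) (anc (kc i \<omega>) \<omega>))"
proof -
  define m where "m = kc i \<omega>"
  define c where "c = anc m \<omega>"
  have i1: "1 \<le> i" using i by simp
  have mF: "m \<le> F" using kc_prop[OF i(2) w] kf_prop[OF i(2) w] F0_le_F unfolding m_def by linarith
  have amp: "16 \<le> \<xi> * (1 + A0) ^ (i - 1)" using nonroot_amp[OF i(1)] .
  have DA0: "D i A0 = \<xi> * real i * (1 + A0) ^ (i - 1)" unfolding DD_def by simp
  have lftA: "D i A0 \<le> D i (lft m c)" using lft_ge[of m c] A0 xi by (intro DD_mono) auto
  show ?thesis
  proof (cases m)
    case 0
    have "1 \<le> A0 * \<xi> * real i" using nonroot_lin[OF i(1)] .
    also have "\<dots> \<le> A0 * D i A0"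
    proof -
      have "1 \<le> (1 + A0) ^ (i - 1)" using A0 by simp
      then have "\<xi> * real i * 1 \<le> \<xi> * real i * (1 + A0) ^ (i - 1)" using xi by (intro mult_left_mono) auto
      then show ?thesis unfolding DA0 using A0 by (simp add: mult.assoc mult_left_mono)
    qed
    also have "\<dots> \<le> hk m * D i (lft m c)" using lftA A0 0 by (simp add: hk_def mult_left_mono)
    finally show ?thesis unfolding m_def c_def by simp
  next
    case (Suc m')
    define c' where "c' = anc m' \<omega>"
    have cc: "c' = c div 2" unfolding c'_def c_def using anc_anc[of m' m \<omega>] mF Suc by simp
    have notP: "\<not> Pc i \<omega> m'" unfolding m_def[symmetric] using Suc
      by (metis kc_def lessI m_def not_less_Least)
    then have big: "8 < hk m' * D i (rgt m' c')" unfolding Pc_def c'_def by simp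
    have Pm: "hk m * D i (rgt m c) \<le> 8" using kc_prop[OF i(2) w] unfolding Pc_def m_def c_def by simp
    have hm': "hk m' = 2 * hk m" unfolding hk_def Suc by simp
    have DrA: "D i A0 \<le> D i (rgt m c)" using lft_ge[of m c] lft_le_rgt[of m c] A0 xi by (intro DD_mono) auto
    have hmb: "hk m * D i A0 \<le> 8" using Pm DrA hk_pos[of m] by (meson mult_left_mono order_trans less_imp_le)
    have small: "real (i - 1) * hk m' \<le> 1"
    proof -
      have "real (i - 1) * hk m' = 2 * (real (i - 1) * hk m)" unfolding hm' by simp
      also have "\<dots> \<le> 2 * (real i * hk m)" using hk_pos[of m] by (intro mult_left_mono mult_right_mono) auto
      also have "\<dots> \<le> 1"
      proof -
        have "hk m * (\<xi> * real i * (1 + A0) ^ (i - 1)) \<le> 8" using hmb DA0 by simp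
        then have "(real i * hk m) * (\<xi> * (1 + A0) ^ (i - 1)) \<le> 8" by (simp add: algebra_simps)
        moreover have "(real i * hk m) * 16 \<le> (real i * hk m) * (\<xi> * (1 + A0) ^ (i - 1))"
          using amp hk_pos[of m] by (intro mult_left_mono) auto
        ultimately show ?thesis by linarith
      qed
      finally show ?thesis .
    qed
    define l' where "l' = lft m' c'"
    have l'0: "0 \<le> l'" using lft_ge[of m' c'] A0 unfolding l'_def by linarith
    have r'eq: "rgt m' c' = l' + hk m'" using rgt_minus_lft[of m' c'] unfolding l'_def by linarith
    have "1 + rgt m' c' \<le> (1 + l') * (1 + hk m')" using r'eq l'0 hk_pos[of m'] by (simp add: algebra_simps)
    then have "(1 + rgt m' c') ^ (i - 1) \<le> ((1 + l') * (1 + hk m')) ^ (i - 1)"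
      using r'eq l'0 hk_pos[of m'] by (intro power_mono) auto
    also have "\<dots> = (1 + l') ^ (i - 1) * (1 + hk m') ^ (i - 1)" by (simp add: power_mult_distrib)
    also have "\<dots> \<le> (1 + l') ^ (i - 1) * 3"
    proof -
      have "(1 + hk m') ^ (i - 1) \<le> exp (real (i - 1) * hk m')"
        using hk_pos[of m'] by (intro one_plus_pow_le_exp) auto
      also have "\<dots> \<le> exp 1" using small by simp
      also have "\<dots> \<le> 3" by (rule exp_le)
      finally show ?thesis using l'0 by (intro mult_left_mono) auto
    qed
    finally have "D i (rgt m' c') \<le> 3 * D i l'" unfolding DD_def using xi
      by (simp add: algebra_simps mult_left_mono)
    moreover have "D i l' \<le> D i (lft m c)"
    proof (intro DD_mono)
      show "0 \<le> \<xi>" using xi by simp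
      show "0 \<le> l'" by (rule l'0)
      have "c div 2 * 2 \<le> c" by (metis div_mult_mod_eq le_add1)
      then have "real (c div 2 * 2) \<le> real c" by (simp only: of_nat_le_iff)
      then have "real (c div 2) * 2 \<le> real c" by simp
      then have "real c' * hk m' \<le> real c * hk m" unfolding cc hm' using hk_pos[of m]
        by (metis mult.assoc mult.commute mult_right_mono less_imp_le)
      then show "l' \<le> lft m c" unfolding l'_def lft_def by simp
    qed
    ultimately have "D i (rgt m' c') \<le> 3 * D i (lft m c)" by linarith
    then have "8 < 2 * hk m * (3 * D i (lft m c))" using big hm' hk_pos[of m']
      by (metis (no_types, lifting) mult_left_mono order_less_le_trans less_imp_le)
    then have "1 \<le> hk m * D i (lft m c)" by (simp add: algebra_simps)
    then show ?thesis unfolding m_def c_def by simp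
  qed
qed


lemma bnd_nonneg: "0 \<le> bnd \<xi> \<eta> A0 \<tau> n"
  unfolding bnd_def using tau A0 DD_nonneg[of \<xi> A0 n] xi by auto

lemma Cell00: "Cell 0 0 = {..<2 ^ F}" unfolding Cell_def using anc_0 by auto

lemma fib_root:
  assumes i: "1 \<le> i" "i \<le> N" "i \<le> Nst"
  shows "real (card (Ev i \<inter> {..<2 ^ F})) \<le> bnd \<xi> \<eta> A0 \<tau> i * real (card {..<(2::nat) ^ F})"
proof -
  have cc: "real (card (Ev i \<inter> Cell 0 0)) \<le>
    (if \<exists>t<2 ^ (F - 0). \<exists>z::int. \<bar>g i (lft 0 0 + real t * hk F) - z\<bar> < 2 * \<tau>
     then 8 * \<tau> * 2 ^ (F - 0) + 2 * (hk 0 * D i (rgt 0 0) + 5) + 8 * \<tau> / (hk F * D i (lft 0 0))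
     else 0)" by (rule cell_count) (use i in auto)
  have l00: "lft 0 0 = A0" unfolding lft_def by simp
  have r00: "rgt 0 0 = 2 * A0" unfolding rgt_def hk_def by simp
  have h0: "hk 0 = A0" unfolding hk_def by simp
  show ?thesis
  proof (cases "\<exists>t<2 ^ (F - 0). \<exists>z::int. \<bar>g i (lft 0 0 + real t * hk F) - z\<bar> < 2 * \<tau>")
    case True
    then obtain t z where t: "t < 2 ^ F" "\<bar>g i (A0 + real t * hk F) - of_int z\<bar> < 2 * \<tau>"
      unfolding l00 by auto
    have "real t * hk F \<le> A0"
    proof -
      have "real t \<le> 2 ^ F" using t(1) by (metis less_imp_le of_nat_le_iff of_nat_numeral of_nat_power)
      then have "real t * hk F \<le> 2 ^ F * hk F" using hk_pos[of F] by (intro mult_right_mono) auto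
      then show ?thesis unfolding hk_def by simp
    qed
    moreover have "0 \<le> real t * hk F" using hk_pos[of F] by simp
    ultimately have "A0 + real t * hk F \<in> {A0..2*A0}" by auto
    then have bnde: "bnd \<xi> \<eta> A0 \<tau> i = 9 * \<tau> + 8 * \<tau> / (A0 * D i A0)"
      unfolding bnd_def using t(2) by auto
    have DNi: "D i (2 * A0) \<le> D N (2 * A0)" using i xi A0 by (intro DD_mono_n) auto
    have "2 * (hk 0 * D i (rgt 0 0) + 5) \<le> \<tau> * 2 ^ F"
      using Fcond DNi A0 unfolding h0 r00 F_def by (smt (verit) mult_left_mono)
    moreover have "8 * \<tau> / (hk F * D i (lft 0 0)) = 8 * \<tau> / (A0 * D i A0) * 2 ^ F"
      unfolding l00 hk_def by simp
    ultimately have "real (card (Ev i \<inter> Cell 0 0)) \<le> (9 * \<tau> + 8 * \<tau> / (A0 * D i A0)) * 2 ^ F"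
      using cc True by (simp add: algebra_simps)
    then show ?thesis unfolding bnde Cell00 by simp
  next
    case False
    have "real (card (Ev i \<inter> Cell 0 0)) \<le> 0" using cc unfolding if_not_P[OF False] .
    then show ?thesis unfolding Cell00 using bnd_nonneg[of i] by (simp add: zero_le_mult_iff)
  qed
qed

lemma fib_nonroot:
  assumes i: "Nst < i" "i \<le> N" and w0: "\<omega>0 < 2 ^ F"
  defines "m \<equiv> kc i \<omega>0" and "c \<equiv> anc (kc i \<omega>0) \<omega>0"
  shows "{\<omega>. \<omega> < 2 ^ F \<and> kc i \<omega> = m \<and> anc m \<omega> = c} = Cell m c"
    and "real (card (Ev i \<inter> Cell m c)) \<le> 17 * \<tau> * real (card (Cell m c))"
proof -
  have mF0: "m \<le> F0" using kc_prop[OF i(2) w0] kf_prop[OF i(2) w0] unfolding m_def by linarith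
  then have mF: "m \<le> F" using F0_le_F by linarith
  have cm: "c < 2 ^ m" unfolding c_def m_def[symmetric] using anc_lt[OF w0 mF] .
  show "{\<omega>. \<omega> < 2 ^ F \<and> kc i \<omega> = m \<and> anc m \<omega> = c} = Cell m c"
  proof
    show "{\<omega>. \<omega> < 2 ^ F \<and> kc i \<omega> = m \<and> anc m \<omega> = c} \<subseteq> Cell m c" unfolding Cell_def by auto
    show "Cell m c \<subseteq> {\<omega>. \<omega> < 2 ^ F \<and> kc i \<omega> = m \<and> anc m \<omega> = c}"
    proof
      fix \<omega> assume "\<omega> \<in> Cell m c"
      then have w: "\<omega> < 2 ^ F" "anc m \<omega> = c" unfolding Cell_def by auto
      have ag: "anc k \<omega> = anc k \<omega>0" if "k \<le> m" for k
        using anc_anc[OF that mF, of \<omega>] anc_anc[OF that mF, of \<omega>0] w(2) c_def m_def by simp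
      have "kc i \<omega>0 = kc i \<omega>" unfolding kc_def
      proof (rule least_agree[where m=m])
        show "Pc i \<omega>0 k \<longleftrightarrow> Pc i \<omega> k" if "k \<le> m" for k unfolding Pc_def using ag[OF that] by simp
        show "Pc i \<omega>0 m" using kc_prop[OF i(2) w0] unfolding m_def by simp
      qed
      then show "\<omega> \<in> {\<omega>. \<omega> < 2 ^ F \<and> kc i \<omega> = m \<and> anc m \<omega> = c}" using w m_def by simp
    qed
  qed
  define R where "R = (2::nat) ^ (F - m)"
  have i1: "1 \<le> i" using i by simp
  have cc: "real (card (Ev i \<inter> Cell m c)) \<le>
    (if \<exists>t<2 ^ (F - m). \<exists>z::int. \<bar>g i (lft m c + real t * hk F) - z\<bar> < 2 * \<tau>
     then 8 * \<tau> * 2 ^ (F - m) + 2 * (hk m * D i (rgt m c) + 5) + 8 * \<tau> / (hk F * D i (lft m c))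
     else 0)" by (rule cell_count[OF i1 i(2) mF])
  have Pm: "hk m * D i (rgt m c) \<le> 8" using kc_prop[OF i(2) w0] unfolding Pc_def m_def c_def by simp
  have lb: "1 \<le> hk m * D i (lft m c)" using nonroot_cell_lb[OF i w0] unfolding m_def c_def by simp
  have RE: "(2::real) ^ E \<le> real R"
  proof -
    have "(2::nat) ^ E \<le> R" unfolding R_def using mF0 unfolding F_def by (intro power_increasing) auto
    then show ?thesis by (metis of_nat_le_iff of_nat_numeral of_nat_power)
  qed
  have hm: "hk m = real R * hk F" using hk_mult[OF mF] R_def by simp
  have X: "8 * \<tau> * 2 ^ (F - m) + 2 * (hk m * D i (rgt m c) + 5) + 8 * \<tau> / (hk F * D i (lft m c))
      \<le> 17 * \<tau> * real R"
  proof -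
    have a: "2 * (hk m * D i (rgt m c) + 5) \<le> \<tau> * real R"
      using Pm Econd RE tau by (smt (verit) mult_left_mono)
    have Dl: "0 < D i (lft m c)" using DD_pos[of \<xi> "lft m c" i] xi lft_ge[of m c] A0 i1 by simp
    have "8 * \<tau> / (hk F * D i (lft m c)) = 8 * \<tau> * real R / (hk m * D i (lft m c))"
      unfolding hm using hk_pos[of F] Dl R_def by (simp add: field_simps)
    also have "\<dots> \<le> 8 * \<tau> * real R / 1" using lb tau by (intro divide_left_mono) auto
    finally have b: "8 * \<tau> / (hk F * D i (lft m c)) \<le> 8 * \<tau> * real R" by simp
    have "8 * \<tau> * 2 ^ (F - m) = 8 * \<tau> * real R" unfolding R_def by simp
    then show ?thesis using a b by linarith
  qed
  have "real (card (Ev i \<inter> Cell m c)) \<le> 17 * \<tau> * real R"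
    using cc X tau by (auto split: if_splits)
  also have "\<dots> \<le> 17 * \<tau> * real (card (Cell m c))"
    using Cell_card[OF cm mF] tau unfolding R_def by (intro mult_left_mono) auto
  finally show "real (card (Ev i \<inter> Cell m c)) \<le> 17 * \<tau> * real (card (Cell m c))" .
qed



end

context scale begin
lemma saturation:
  assumes i: "Nst + d < i" "i \<le> N" and j: "j < i - d"
    and w: "\<omega> < 2 ^ F" "\<omega>' < 2 ^ F" and fe: "ff i \<omega> = ff i \<omega>'" and inA: "\<omega> \<in> Ev j"
  shows "\<omega>' \<in> Ev j"
proof -
  have j1: "1 \<le> j" "j \<le> N" using inA i j unfolding Ev_def by (auto split: if_splits)
  have ni: "\<not> (i = 0 \<or> N < i)" "\<not> i \<le> Nst" using i by auto
  define m where "m = kc i \<omega>"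
  have mm: "kc i \<omega>' = m" "anc m \<omega>' = anc m \<omega>"
    using fe ni unfolding ff_def mlev_def m_def by (auto split: if_splits)
  have mF: "m \<le> F" using kc_prop[OF i(2) w(1)] kf_prop[OF i(2) w(1)] F0_le_F unfolding m_def by linarith
  have ag: "anc k \<omega> = anc k \<omega>'" if "k \<le> m" for k
    using anc_anc[OF that mF, of \<omega>] anc_anc[OF that mF, of \<omega>'] mm(2) by simp
  define r where "r = rgt m (anc m \<omega>)"
  have Pci: "hk m * D i r \<le> 8" using kc_prop[OF i(2) w(1)] unfolding Pc_def r_def m_def by simp
  have rA: "A0 \<le> r" unfolding r_def using lft_ge lft_le_rgt order_trans by blast
  have ji: "j \<le> i" using j by linarith
  have rat: "D j r * (1 + A0) ^ (i - j) \<le> D i r" by (rule DD_ratio[OF j1(1) ji rA])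
  have pd: "(1 + A0) ^ d \<le> (1 + A0) ^ (i - j)" using j A0 by (intro power_increasing) auto
  have Pfj: "Pf j \<omega> m"
  proof -
    have Dj0: "0 \<le> D j r" using DD_nonneg[of \<xi> r j] xi rA A0 by simp
    have "hk m * D j r * 8 \<le> hk m * D j r * (\<tau> * (1 + A0) ^ d)"
      using dcond Dj0 hk_pos[of m] by (intro mult_left_mono) auto
    also have "\<dots> \<le> \<tau> * (hk m * (D j r * (1 + A0) ^ (i - j)))"
      using pd Dj0 hk_pos[of m] tau by (simp add: mult_left_mono algebra_simps)
    also have "\<dots> \<le> \<tau> * (hk m * D i r)"
      using rat hk_pos[of m] tau by (intro mult_left_mono) auto
    also have "\<dots> \<le> \<tau> * 8" using Pci tau by (intro mult_left_mono) auto
    finally have "hk m * D j r \<le> \<tau>" by simp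
    then show ?thesis unfolding Pf_def r_def by simp
  qed
  have kfeq: "kf j \<omega> = kf j \<omega>'" unfolding kf_def
  proof (rule least_agree[where m=m])
    show "Pf j \<omega> k \<longleftrightarrow> Pf j \<omega>' k" if "k \<le> m" for k unfolding Pf_def using ag[OF that] by simp
  qed (rule Pfj)
  have kfm: "kf j \<omega> \<le> m" unfolding kf_def using Pfj by (rule Least_le)
  have aeq: "anc (kf j \<omega>) \<omega> = anc (kf j \<omega>) \<omega>'" using ag[OF kfm] .
  have jn: "\<not> (j = 0 \<or> N < j)" using j1 by auto
  obtain e z where ez: "lft (kf j \<omega>) (anc (kf j \<omega>) \<omega>) \<le> e" "e \<le> rgt (kf j \<omega>) (anc (kf j \<omega>) \<omega>)"
    "\<bar>g j e - of_int z\<bar> < \<tau>"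
    using inA jn unfolding Ev_def by auto
  have "lft (kf j \<omega>') (anc (kf j \<omega>') \<omega>') \<le> e" "e \<le> rgt (kf j \<omega>') (anc (kf j \<omega>') \<omega>')"
    using ez(1,2) unfolding kfeq[symmetric] aeq[symmetric] by auto
  then show ?thesis using ez(3) w(2) jn unfolding Ev_def by auto
qed

lemma pp_nonneg: "0 \<le> pp n" unfolding pp_def using bnd_nonneg tau by auto

lemma bnd_le: "1 \<le> n \<Longrightarrow> n \<le> Nst \<Longrightarrow> bnd \<xi> \<eta> A0 \<tau> n \<le> 1/8"
proof -
  assume "1 \<le> n" "n \<le> Nst"
  then have "bnd \<xi> \<eta> A0 \<tau> n \<le> (\<Sum>n\<in>{1..Nst}. bnd \<xi> \<eta> A0 \<tau> n)"
    using bnd_nonneg by (intro member_le_sum) auto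
  then show ?thesis using roots by linarith
qed

lemma xx_split: "xx j \<le> (if 1 \<le> j \<and> j \<le> Nst then 2 * bnd \<xi> \<eta> A0 \<tau> j else 0) + (if Nst < j then 34 * \<tau> else 0)"
  unfolding xx_def pp_def using bnd_nonneg tau by auto

lemma sum_Gam: "(\<Sum>j\<in>Gam i. xx j) \<le> 1/2"
proof (cases "i \<le> Nst + d")
  case True
  have "(\<Sum>j\<in>Gam i. xx j) = (\<Sum>j<i. xx j)" unfolding Gam_def using True by simp
  also have "\<dots> \<le> (\<Sum>j<i. (if 1 \<le> j \<and> j \<le> Nst then 2 * bnd \<xi> \<eta> A0 \<tau> j else 0) + (if Nst < j then 34 * \<tau> else 0))"
    by (rule sum_mono) (rule xx_split)
  also have "\<dots> = (\<Sum>j<i. (if 1 \<le> j \<and> j \<le> Nst then 2 * bnd \<xi> \<eta> A0 \<tau> j else 0)) + (\<Sum>j<i. (if Nst < j then 34 * \<tau> else 0))"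
    by (rule sum.distrib)
  also have "\<dots> \<le> 1/4 + 1/4"
  proof (rule add_mono)
    have "(\<Sum>j<i. (if 1 \<le> j \<and> j \<le> Nst then 2 * bnd \<xi> \<eta> A0 \<tau> j else 0)) = (\<Sum>j\<in>{..<i} \<inter> {j. 1 \<le> j \<and> j \<le> Nst}. 2 * bnd \<xi> \<eta> A0 \<tau> j)"
      using sum.inter_restrict[of "{..<i}" "\<lambda>j. 2 * bnd \<xi> \<eta> A0 \<tau> j" "{j. 1 \<le> j \<and> j \<le> Nst}"] by simp
    also have "\<dots> \<le> (\<Sum>j\<in>{1..Nst}. 2 * bnd \<xi> \<eta> A0 \<tau> j)"
      using bnd_nonneg by (intro sum_mono2) auto
    also have "\<dots> \<le> 1/4" using roots by (simp add: sum_distrib_left[symmetric])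
    finally show "(\<Sum>j<i. (if 1 \<le> j \<and> j \<le> Nst then 2 * bnd \<xi> \<eta> A0 \<tau> j else 0)) \<le> 1/4" .
    have "(\<Sum>j<i. (if Nst < j then 34 * \<tau> else 0)) = (\<Sum>j\<in>{..<i} \<inter> {j. Nst < j}. 34 * \<tau>)"
      using sum.inter_restrict[of "{..<i}" "\<lambda>_. 34 * \<tau>" "{j. Nst < j}"] by simp
    also have "\<dots> = 34 * \<tau> * real (card ({..<i} \<inter> {j. Nst < j}))" by (simp only: sum_constant mult.commute)
    also have "\<dots> \<le> 34 * \<tau> * real d"
    proof -
      have "{..<i} \<inter> {j. Nst < j} \<subseteq> {Nst<..<Nst + d}" using True by auto
      then have "card ({..<i} \<inter> {j. Nst < j}) \<le> card {Nst<..<Nst + d}" by (intro card_mono) auto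
      also have "\<dots> \<le> d" by simp
      finally show ?thesis using tau by (intro mult_left_mono) auto
    qed
    also have "\<dots> \<le> 1/4" by (rule dsmall)
    finally show "(\<Sum>j<i. (if Nst < j then 34 * \<tau> else 0)) \<le> 1/4" .
  qed
  finally show ?thesis by simp
next
  case False
  have "(\<Sum>j\<in>Gam i. xx j) \<le> (\<Sum>j\<in>{i - d..<i}. 34 * \<tau>)"
  proof -
    have "xx j \<le> 34 * \<tau>" if "j \<in> {i - d..<i}" for j
    proof -
      have "Nst < j" using that False by auto
      then show ?thesis using xx_split[of j] by simp
    qed
    moreover have "Gam i = {i - d..<i}" unfolding Gam_def using False by simp
    ultimately show ?thesis by (metis atLeastLessThan_iff sum_mono)
  qed
  also have "\<dots> = 34 * \<tau> * real d" using False by simp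
  also have "\<dots> \<le> 1/4" by (rule dsmall)
  finally show ?thesis by simp
qed

lemma xx_lt1: "xx n < 1"
proof -
  have "pp n \<le> 17/64"
  proof -
    have "bnd \<xi> \<eta> A0 \<tau> n \<le> 17/64" if "1 \<le> n" "n \<le> Nst" using bnd_le[OF that] by simp
    then show ?thesis unfolding pp_def using tau by auto
  qed
  then show ?thesis unfolding xx_def by simp
qed

interpretation L: lll_setup "{..<2 ^ F}" Ev ff pp xx Gam
proof
  show "finite {..<(2::nat) ^ F}" by simp
  show "Ev i \<subseteq> {..<2 ^ F}" for i unfolding Ev_def by auto
  show "real (card (Ev i \<inter> {\<omega> \<in> {..<2 ^ F}. ff i \<omega> = b})) \<le> pp i * real (card {\<omega> \<in> {..<2 ^ F}. ff i \<omega> = b})" for i b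
  proof (cases "i = 0 \<or> N < i")
    case True
    then show ?thesis unfolding Ev_def pp_def by simp
  next
    case ni: False
    show ?thesis
    proof (cases "i \<le> Nst")
      case True
      have fib: "{\<omega> \<in> {..<2 ^ F}. ff i \<omega> = b} = (if b = (0, 0) then {..<2 ^ F} else {})"
        unfolding ff_def mlev_def using ni True anc_0 by auto
      show ?thesis
      proof (cases "b = (0, 0)")
        case b: True
        have "pp i = bnd \<xi> \<eta> A0 \<tau> i" unfolding pp_def using ni True by simp
        then show ?thesis unfolding fib using b fib_root[of i] ni True by simp
      next
        case False then show ?thesis unfolding fib by simp
      qed
    next
      case nr: False
      have ppi: "pp i = 17 * \<tau>" unfolding pp_def using ni nr by simp
      show ?thesis
      proof (cases "{\<omega> \<in> {..<2 ^ F}. ff i \<omega> = b} = {}")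
        case True then show ?thesis unfolding True by simp
      next
        case False
        then obtain \<omega>0 where w0: "\<omega>0 < 2 ^ F" "ff i \<omega>0 = b" by auto
        have fibeq: "{\<omega> \<in> {..<2 ^ F}. ff i \<omega> = b} = {\<omega>. \<omega> < 2 ^ F \<and> kc i \<omega> = kc i \<omega>0 \<and> anc (kc i \<omega>0) \<omega> = anc (kc i \<omega>0) \<omega>0}"
          using w0 ni nr unfolding ff_def mlev_def by auto
        have i': "Nst < i" "i \<le> N" using ni nr by auto
        show ?thesis unfolding fibeq fib_nonroot(1)[OF i' w0(1)] ppi
          using fib_nonroot(2)[OF i' w0(1)] by simp
      qed
    qed
  qed
  show "\<omega>' \<in> Ev j" if "j < i" "j \<notin> Gam i" "\<omega> \<in> {..<2 ^ F}" "\<omega>' \<in> {..<2 ^ F}" "ff i \<omega> = ff i \<omega>'" "\<omega> \<in> Ev j" for i j \<omega> \<omega>'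
  proof (cases "N < i")
    case True
    have "ff i \<omega> = (\<omega>, 0)" "ff i \<omega>' = (\<omega>', 0)" using True by (simp_all only: ff_def if_True disj_not1 simp_thms)
    then have "\<omega> = \<omega>'" using that(5) by (metis prod.inject)
    then show ?thesis using that(6) by simp
  next
    case False
    have g1: "\<not> i \<le> Nst + d"
    proof
      assume "i \<le> Nst + d"
      then have "Gam i = {..<i}" unfolding Gam_def by simp
      then show False using that(1,2) by simp
    qed
    then have "Gam i = {i - d..<i}" unfolding Gam_def by simp
    then have jd: "j < i - d" using that(1,2) by auto
    have i: "Nst + d < i" "i \<le> N" using g1 False by auto
    have w: "\<omega> < 2 ^ F" "\<omega>' < 2 ^ F" using that(3,4) by auto
    show ?thesis by (rule saturation[OF i jd w that(5) that(6)])
  qed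
  show "Gam i \<subseteq> {..<i}" for i unfolding Gam_def by auto
  show "j' < j" if "j \<in> Gam i" "j' < i" "j' \<notin> Gam i" for i j j'
  proof (cases "i \<le> Nst + d")
    case True
    then have "Gam i = {..<i}" unfolding Gam_def by simp
    then show ?thesis using that by simp
  next
    case False
    then have "Gam i = {i - d..<i}" unfolding Gam_def by simp
    then show ?thesis using that by simp
  qed
  show "0 \<le> xx i" for i unfolding xx_def using pp_nonneg by simp
  show "pp i \<le> xx i * (1 - (\<Sum>j\<in>Gam i. xx j))" for i
  proof -
    have "pp i * 1 \<le> pp i * (2 * (1 - (\<Sum>j\<in>Gam i. xx j)))"
      using sum_Gam[of i] pp_nonneg[of i] by (intro mult_left_mono) auto
    then show ?thesis unfolding xx_def by (simp add: algebra_simps)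
  qed
  show "(\<Sum>j\<in>Gam i. xx j) \<le> 1" for i using sum_Gam[of i] by simp
  show "xx i \<le> 1" for i using xx_lt1[of i] by simp
qed

theorem scale_point: "\<exists>e\<in>{A0..2*A0}. \<forall>n. 1 \<le> n \<longrightarrow> n \<le> N \<longrightarrow> (\<forall>z::int. \<tau> \<le> \<bar>g n e - z\<bar>)"
proof -
  have "(\<Prod>j<Suc N. 1 - xx j) * real (card {..<(2::nat) ^ F}) \<le> real (card (L.G {..<Suc N}))"
    by (rule L.final)
  moreover have "0 < (\<Prod>j<Suc N. 1 - xx j)" using xx_lt1 by (intro prod_pos) auto
  moreover have "0 < real (card {..<(2::nat) ^ F})" by simp
  ultimately have "0 < card (L.G {..<Suc N})" by (metis mult_pos_pos of_nat_0_less_iff order_less_le_trans)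
  then obtain \<omega> where w: "\<omega> \<in> L.G {..<Suc N}" by (metis card.empty equals0I less_irrefl)
  then have wl: "\<omega> < 2 ^ F" and nA: "\<And>j. j \<le> N \<Longrightarrow> \<omega> \<notin> Ev j" unfolding L.G_def by auto
  define e where "e = lft F \<omega>"
  have eA: "e \<in> {A0..2*A0}"
  proof -
    have "real \<omega> \<le> 2 ^ F" using wl by (metis less_imp_le of_nat_le_iff of_nat_numeral of_nat_power)
    then have "real \<omega> * hk F \<le> 2 ^ F * hk F" using hk_pos[of F] by (intro mult_right_mono) auto
    moreover have "0 \<le> real \<omega> * hk F" using hk_pos[of F] by simp
    ultimately show ?thesis unfolding e_def lft_def by (auto simp: hk_def)
  qed
  have "\<forall>n. 1 \<le> n \<longrightarrow> n \<le> N \<longrightarrow> (\<forall>z::int. \<tau> \<le> \<bar>g n e - z\<bar>)"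
  proof (intro allI impI)
    fix n z assume n: "1 \<le> n" "n \<le> N"
    show "\<tau> \<le> \<bar>g n e - of_int z\<bar>"
    proof (rule ccontr)
      assume "\<not> \<tau> \<le> \<bar>g n e - of_int z\<bar>"
      then have bad: "\<bar>g n e - of_int z\<bar> < \<tau>" by simp
      have kF: "kf n \<omega> \<le> F" using kf_prop[OF n(2) wl] F0_le_F by linarith
      have "\<omega> \<in> Ev n" unfolding Ev_def using n wl bad lftF_in[OF kF, of \<omega>] unfolding e_def by auto
      then show False using nA n by auto
    qed
  qed
  then show ?thesis using eA by blast
qed

end


lemma harm_bound: "1 \<le> N \<Longrightarrow> (\<Sum>k\<in>{1..N}. 1 / real k) \<le> 1 + ln (real N)"
proof (induction N rule: dec_induct)
  case base then show ?case by simp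
next
  case (step m)
  have m1: "1 \<le> m" using step by simp
  have "(\<Sum>k\<in>{1..Suc m}. 1 / real k) = (\<Sum>k\<in>{1..m}. 1 / real k) + 1 / real (Suc m)"
    by simp
  also have "\<dots> \<le> 1 + ln (real m) + 1 / real (Suc m)" using step.IH by simp
  also have "\<dots> \<le> 1 + ln (real (Suc m))"
  proof -
    have "ln (real m) - ln (real (Suc m)) = ln (real m / real (Suc m))" using m1 by (simp add: ln_div)
    also have "\<dots> \<le> real m / real (Suc m) - 1" using m1 by (intro ln_le_minus_one) auto
    also have "\<dots> = - (1 / real (Suc m))" by (simp add: field_simps)
    finally show ?thesis by simp
  qed
  finally show ?case .
qed

lemma flat_count:
  fixes \<xi> a C L :: real and S n :: nat and \<eta> :: "nat \<Rightarrow> real"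
  assumes xi: "\<xi> > 0" and a: "a > 0" and n: "1 \<le> n"
    and CL: "4 \<le> C * L" and CLxi: "4 * 2 ^ S \<le> C * L * \<xi>" and Sa: "2 ^ S * a \<le> 1"
  shows "real (card {s. s < S \<and> 2 ^ s * a * DD \<xi> n (2 ^ s * a) < 1 \<and>
            (\<exists>e\<in>{2 ^ s * a..2 * (2 ^ s * a)}. \<exists>z::int. \<bar>gg \<xi> \<eta> n e - z\<bar> < 2 * (2 ^ s * a / (C * L)))})
         \<le> 22 + 4 / \<xi>"
proof -
  define A where "A s = (2::real) ^ s * a" for s :: nat
  define tt where "tt s = A s / (C * L)" for s :: nat
  define T where "T = {s. s < S \<and> A s * DD \<xi> n (A s) < 1 \<and>
            (\<exists>e\<in>{A s..2 * A s}. \<exists>z::int. \<bar>gg \<xi> \<eta> n e - z\<bar> < 2 * tt s)}"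
  let ?g = "gg \<xi> \<eta> n"
  have CLpos: "C * L > 0" using CL by linarith
  have Apos: "A s > 0" for s unfolding A_def using a by simp
  have Age: "a \<le> A s" for s unfolding A_def using a by simp
  have Amono: "s \<le> s' \<Longrightarrow> A s \<le> A s'" for s s' unfolding A_def using a
    by (intro mult_right_mono power_increasing) auto
  have ttS: "s < S \<Longrightarrow> tt s \<le> 2 ^ S * a / (C * L)" for s
    unfolding tt_def A_def using a CLpos
    by (intro divide_right_mono mult_right_mono power_increasing) auto
  have ttsmall: "s < S \<Longrightarrow> 2 * tt s \<le> 1" for s
  proof -
    assume "s < S"
    then have "tt s \<le> 2 ^ S * a / (C * L)" by (rule ttS)
    also have "\<dots> \<le> 1 / 4" using Sa CL CLpos by (simp add: divide_simps)
    finally show ?thesis by simp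
  qed
  have gmono: "0 \<le> x \<Longrightarrow> x \<le> y \<Longrightarrow> ?g x \<le> ?g y" for x y
    using gg_diff(1)[where x=x and y=y and n=n and \<eta>=\<eta>] xi DD_nonneg[of \<xi> x n] by (smt (verit) mult_nonneg_nonneg)
  have main: "real (card T) \<le> 22 + 4 / \<xi>"
  proof (cases "T = {}")
    case True
    then show ?thesis using xi by simp
  next
    case False
    have finT: "finite T" unfolding T_def by simp
    define t where "t = Max T"
    have tT: "t \<in> T" unfolding t_def using finT False by simp
    have tmax: "s \<in> T \<Longrightarrow> s \<le> t" for s unfolding t_def using finT by simp
    have ex: "\<forall>s\<in>T. \<exists>e z. e \<in> {A s..2 * A s} \<and> \<bar>?g e - of_int z\<bar> < 2 * tt s"
      unfolding T_def by blast
    obtain e z where ez: "\<And>s. s \<in> T \<Longrightarrow> e s \<in> {A s..2 * A s} \<and> \<bar>?g (e s) - of_int (z s)\<bar> < 2 * tt s"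
      using bchoice[OF ex] by (metis)
    have fib: "s \<in> T \<Longrightarrow> s' \<in> T \<Longrightarrow> s < s' \<Longrightarrow> z s = z s' \<Longrightarrow> s' = s + 1" for s s'
    proof (rule ccontr)
      assume s: "s \<in> T" "s' \<in> T" "s < s'" "z s = z s'" "s' \<noteq> s + 1"
      then have ss: "s + 2 \<le> s'" by simp
      have sS: "s < S" "s' < S" using s unfolding T_def by auto
      have es: "A s \<le> e s" "e s \<le> 2 * A s" using ez[OF s(1)] by auto
      have es': "A s' \<le> e s'" using ez[OF s(2)] by auto
      have "A (s + 2) \<le> A s'" using Amono[OF ss] .
      moreover have "A (s + 2) = 4 * A s" unfolding A_def by (simp add: power_add)
      ultimately have "e s' - e s \<ge> a" using es es' Age[of s] by linarith
      moreover have "0 \<le> e s" using es Apos[of s] by linarith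
      moreover have "e s \<le> e s'" using es es' \<open>A (s + 2) = 4 * A s\<close> \<open>A (s + 2) \<le> A s'\<close> Apos[of s] by linarith
      ultimately have "a * DD \<xi> n (e s) \<le> ?g (e s') - ?g (e s)"
        using gg_diff(1)[where x="e s" and y="e s'" and n=n and \<eta>=\<eta>] xi DD_nonneg[of \<xi> "e s" n]
        by (smt (verit) mult_right_mono)
      moreover have "\<xi> \<le> DD \<xi> n (e s)"
      proof -
        have "1 \<le> (1 + e s) ^ (n - 1)" using \<open>0 \<le> e s\<close> by simp
        moreover have "1 \<le> real n" using n by simp
        ultimately have "1 \<le> real n * (1 + e s) ^ (n - 1)" by (metis mult_mono' mult_1_left zero_le_one)
        then show ?thesis unfolding DD_def using xi by (simp add: mult.assoc mult_le_cancel_left1)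
      qed
      ultimately have "a * \<xi> \<le> ?g (e s') - ?g (e s)" using a by (smt (verit) mult_left_mono)
      moreover have "?g (e s') - ?g (e s) < 2 * tt s' + 2 * tt s"
        using ez[OF s(1)] ez[OF s(2)] s(4) by (auto simp: abs_less_iff)
      moreover have "2 * tt s' + 2 * tt s \<le> 4 * (2 ^ S * a / (C * L))"
      proof -
        have "\<forall>B. tt s \<le> B \<longrightarrow> tt s' \<le> B \<longrightarrow> 2 * tt s' + 2 * tt s \<le> 4 * B" by linarith
        then show ?thesis using ttS[OF sS(1)] ttS[OF sS(2)] by blast
      qed
      ultimately have "a * \<xi> < 4 * (2 ^ S * a / (C * L))" by linarith
      then have "a * \<xi> * (C * L) < 4 * 2 ^ S * a" using CLpos by (simp add: field_simps)
      moreover have "4 * 2 ^ S * a \<le> a * \<xi> * (C * L)" using CLxi a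
        by (metis mult.commute mult.left_commute mult_le_cancel_left_pos)
      ultimately show False by linarith
    qed
    define Z where "Z = z ` T"
    have finZ: "finite Z" unfolding Z_def using finT by simp
    have cT: "card T \<le> 2 * card Z"
    proof -
      have Tun: "T = (\<Union>w\<in>Z. {s\<in>T. z s = w})" unfolding Z_def by auto
      have fb: "card {s\<in>T. z s = w} \<le> 2" if "w \<in> Z" for w
      proof -
        let ?B = "{s\<in>T. z s = w}"
        have ne: "?B \<noteq> {}" using that unfolding Z_def by auto
        have fB: "finite ?B" using finT by simp
        define m where "m = Min ?B"
        have mB: "m \<in> ?B" unfolding m_def using fB ne by (rule Min_in)
        have "?B \<subseteq> {m, m + 1}"
        proof
          fix s assume sB: "s \<in> ?B"
          have "m \<le> s" unfolding m_def using fB sB by simp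
          then show "s \<in> {m, m + 1}"
          proof (cases "m = s")
            case False
            then have "m < s" using \<open>m \<le> s\<close> by simp
            then show ?thesis using fib[of m s] mB sB by auto
          qed simp
        qed
        then have "card ?B \<le> card {m, m + 1}" by (intro card_mono) auto
        also have "\<dots> \<le> 2" by (simp add: card_insert_if)
        finally show ?thesis .
      qed
      have "card T \<le> (\<Sum>w\<in>Z. card {s\<in>T. z s = w})"
        by (subst Tun, rule card_UN_le[OF finZ])
      also have "\<dots> \<le> (\<Sum>w\<in>Z. 2)" by (rule sum_mono) (rule fb)
      also have "\<dots> = 2 * card Z" by simp
      finally show ?thesis .
    qed
    have tS: "t < S" and tflat: "A t * DD \<xi> n (A t) < 1" using tT unfolding T_def by auto
    have Zsub: "Z \<subseteq> {\<lfloor>?g a\<rfloor> - 1 .. \<lceil>?g (2 * A t)\<rceil> + 1}"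
    proof
      fix w assume "w \<in> Z"
      then obtain s where s: "s \<in> T" "w = z s" unfolding Z_def by auto
      have sS: "s < S" using s unfolding T_def by auto
      have es: "A s \<le> e s" "e s \<le> 2 * A s" using ez[OF s(1)] by auto
      have "?g a \<le> ?g (e s)" using gmono[of a "e s"] a Age[of s] es by linarith
      moreover have "?g (e s) \<le> ?g (2 * A t)"
        using gmono[of "e s" "2 * A t"] es Apos[of s] Amono[OF tmax[OF s(1)]] by linarith
      moreover have "\<bar>?g (e s) - of_int (z s)\<bar> < 1" using ez[OF s(1)] ttsmall[OF sS] by linarith
      ultimately show "w \<in> {\<lfloor>?g a\<rfloor> - 1 .. \<lceil>?g (2 * A t)\<rceil> + 1}" using s(2)
        by (auto simp: abs_less_iff) linarith+
    qed
    have cZ: "real (card Z) \<le> ?g (2 * A t) - ?g a + 5"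
    proof -
      have "card Z \<le> card {\<lfloor>?g a\<rfloor> - 1 .. \<lceil>?g (2 * A t)\<rceil> + 1}" by (rule card_mono) (use Zsub in auto)
      also have "\<dots> = nat (\<lceil>?g (2 * A t)\<rceil> + 1 + 1 - (\<lfloor>?g a\<rfloor> - 1))" by simp
      finally have "real (card Z) \<le> real (nat (\<lceil>?g (2 * A t)\<rceil> + 1 + 1 - (\<lfloor>?g a\<rfloor> - 1)))" by simp
      moreover have "?g a \<le> ?g (2 * A t)" using gmono[of a "2 * A t"] a Age[of t] Apos[of t] by linarith
      ultimately show ?thesis by linarith
    qed
    have V: "?g (2 * A t) - ?g a \<le> 6 + 2 / \<xi>"
    proof -
      let ?x = "A t"
      have x0: "0 < ?x" by (rule Apos)
      have "?g (2 * ?x) - ?g a \<le> (2 * ?x - a) * DD \<xi> n (2 * ?x)"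
        using gg_diff(2)[where x=a and y="2 * ?x" and n=n and \<eta>=\<eta>] xi a Age[of t] x0 by simp
      also have "\<dots> \<le> 2 * ?x * DD \<xi> n (2 * ?x)"
        using a DD_nonneg[of \<xi> "2 * ?x" n] xi x0 by (intro mult_right_mono) auto
      also have "\<dots> \<le> 2 * (?x * DD \<xi> n ?x) * (1 + ?x) ^ (n - 1)"
      proof -
        have "(1 + 2 * ?x) ^ (n - 1) \<le> ((1 + ?x) * (1 + ?x)) ^ (n - 1)"
          using x0 by (intro power_mono) (auto simp: algebra_simps)
        also have "\<dots> = (1 + ?x) ^ (n - 1) * (1 + ?x) ^ (n - 1)" by (simp add: power_mult_distrib)
        finally have p: "(1 + 2 * ?x) ^ (n - 1) \<le> (1 + ?x) ^ (n - 1) * (1 + ?x) ^ (n - 1)" .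
        have "2 * ?x * DD \<xi> n (2 * ?x) = 2 * ?x * \<xi> * real n * (1 + 2 * ?x) ^ (n - 1)"
          unfolding DD_def by (simp add: algebra_simps)
        also have "\<dots> \<le> 2 * ?x * \<xi> * real n * ((1 + ?x) ^ (n - 1) * (1 + ?x) ^ (n - 1))"
          using p x0 xi by (intro mult_left_mono) auto
        also have "\<dots> = 2 * (?x * DD \<xi> n ?x) * (1 + ?x) ^ (n - 1)"
          unfolding DD_def by (simp add: algebra_simps)
        finally show ?thesis .
      qed
      also have "\<dots> \<le> 2 * (1 + ?x) ^ (n - 1)"
        using tflat x0 by (intro mult_right_mono) auto
      also have "\<dots> \<le> 2 * (3 + 1 / \<xi>)"
      proof -
        have "(1 + ?x) ^ (n - 1) \<le> 3 + 1 / \<xi>"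
        proof (cases "1 \<le> ?x * real n")
          case True
          have "?x * DD \<xi> n ?x = (?x * real n) * (\<xi> * (1 + ?x) ^ (n - 1))" unfolding DD_def by (simp add: algebra_simps)
          then have "(?x * real n) * (\<xi> * (1 + ?x) ^ (n - 1)) < 1" using tflat by linarith
          moreover have "1 * (\<xi> * (1 + ?x) ^ (n - 1)) \<le> (?x * real n) * (\<xi> * (1 + ?x) ^ (n - 1))"
            using True xi x0 by (intro mult_right_mono) auto
          ultimately have "\<xi> * (1 + ?x) ^ (n - 1) < 1" by linarith
          then have "(1 + ?x) ^ (n - 1) < 1 / \<xi>" using xi by (simp add: field_simps)
          then show ?thesis by linarith
        next
          case False
          have "(1 + ?x) ^ (n - 1) \<le> exp (real (n - 1) * ?x)" using x0 by (intro one_plus_pow_le_exp) auto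
          also have "\<dots> \<le> exp 1" using False x0 n by (simp add: of_nat_diff algebra_simps)
          also have "\<dots> \<le> 3" by (rule exp_le)
          finally show ?thesis using xi by (smt (verit) divide_pos_pos)
        qed
        then show ?thesis by simp
      qed
      finally show ?thesis by (simp add: algebra_simps)
    qed
    have "real (card T) \<le> 2 * real (card Z)" using cT by (metis of_nat_le_iff of_nat_mult of_nat_numeral)
    also have "\<dots> \<le> 22 + 4 / \<xi>" using cZ V by linarith
    finally show ?thesis .
  qed
  then show ?thesis unfolding T_def A_def tt_def by simp
qed


lemma bnd_point:
  fixes \<xi> A C L :: real
  assumes xi: "\<xi> > 0" and A: "A > 0" and CL: "C * L > 0" and n: "1 \<le> n"
  shows "bnd \<xi> \<eta> A (A / (C * L)) n \<le> 17 * (A / (C * L)) +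
     (if A * DD \<xi> n A < 1 \<and> (\<exists>e\<in>{A..2 * A}. \<exists>z::int. \<bar>gg \<xi> \<eta> n e - z\<bar> < 2 * (A / (C * L)))
      then 8 / (C * L * \<xi> * real n) else 0)"
proof -
  let ?t = "A / (C * L)"
  have t0: "0 < ?t" using A CL by simp
  have Dpos: "0 < DD \<xi> n A" using DD_pos[of \<xi> A n] xi A n by simp
  have Dge: "\<xi> * real n \<le> DD \<xi> n A"
  proof -
    have "1 \<le> (1 + A) ^ (n - 1)" using A by simp
    then have "\<xi> * real n * 1 \<le> \<xi> * real n * (1 + A) ^ (n - 1)" using xi by (intro mult_left_mono) auto
    then show ?thesis unfolding DD_def by simp
  qed
  show ?thesis
  proof (cases "\<exists>e\<in>{A..2 * A}. \<exists>z::int. \<bar>gg \<xi> \<eta> n e - z\<bar> < 2 * ?t")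
    case False
    then have "bnd \<xi> \<eta> A ?t n = 0" unfolding bnd_def by auto
    then show ?thesis using t0 False xi n CL by auto
  next
    case band: True
    then have b: "bnd \<xi> \<eta> A ?t n = 9 * ?t + 8 * ?t / (A * DD \<xi> n A)" unfolding bnd_def by auto
    show ?thesis
    proof (cases "A * DD \<xi> n A < 1")
      case True
      have "8 * ?t / (A * DD \<xi> n A) = 8 / (C * L * DD \<xi> n A)" using A CL Dpos by (simp add: field_simps)
      also have "\<dots> \<le> 8 / (C * L * (\<xi> * real n))"
      proof (rule frac_le)
        show "0 < C * L * (\<xi> * real n)" using CL xi n by simp
        show "C * L * (\<xi> * real n) \<le> C * L * DD \<xi> n A" using Dge CL by (intro mult_left_mono) auto
      qed auto
      finally show ?thesis unfolding b using True band t0 by (simp add: mult.assoc)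
    next
      case False
      have "8 * ?t / (A * DD \<xi> n A) \<le> 8 * ?t / 1" using False t0 by (intro divide_left_mono) auto
      then show ?thesis unfolding b using False t0 by simp
    qed
  qed
qed

lemma select_scale:
  fixes \<xi> a C L :: real and S Nst :: nat and \<eta> :: "nat \<Rightarrow> real"
  assumes xi: "\<xi> > 0" and a: "a > 0" and S: "1 \<le> S"
    and CL: "4 \<le> C * L" and CLxi: "4 * 2 ^ S \<le> C * L * \<xi>" and Sa: "2 ^ S * a \<le> 1"
    and Nst: "1 \<le> Nst"
    and c2: "17 * 2 ^ S * a * real Nst \<le> C * L / 16"
    and c3: "8 * (22 + 4 / \<xi>) * (1 + ln (real Nst)) \<le> C * L * \<xi> * real S / 16"
  shows "\<exists>s<S. (\<Sum>n\<in>{1..Nst}. bnd \<xi> \<eta> (2 ^ s * a) (2 ^ s * a / (C * L)) n) \<le> 1/8"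
proof (rule ccontr)
  assume "\<not> ?thesis"
  then have big: "\<And>s. s < S \<Longrightarrow> 1/8 < (\<Sum>n\<in>{1..Nst}. bnd \<xi> \<eta> (2 ^ s * a) (2 ^ s * a / (C * L)) n)"
    by auto
  define A where "A s = (2::real) ^ s * a" for s :: nat
  define Q where "Q = 22 + 4 / \<xi>"
  define fl where "fl s n \<longleftrightarrow> A s * DD \<xi> n (A s) < 1 \<and>
      (\<exists>e\<in>{A s..2 * A s}. \<exists>z::int. \<bar>gg \<xi> \<eta> n e - z\<bar> < 2 * (A s / (C * L)))" for s n
  have CLpos: "C * L > 0" using CL by linarith
  have Apos: "A s > 0" for s unfolding A_def using a by simp
  have AS: "s < S \<Longrightarrow> A s \<le> 2 ^ S * a" for s unfolding A_def using a
    by (intro mult_right_mono power_increasing) auto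
  have pt: "bnd \<xi> \<eta> (A s) (A s / (C * L)) n \<le> 17 * (2 ^ S * a / (C * L)) + (if fl s n then 8 / (C * L * \<xi> * real n) else 0)"
    if "s < S" "n \<in> {1..Nst}" for s n
  proof -
    have "bnd \<xi> \<eta> (A s) (A s / (C * L)) n \<le> 17 * (A s / (C * L)) + (if fl s n then 8 / (C * L * \<xi> * real n) else 0)"
      using bnd_point[of \<xi> "A s" C L n \<eta>] xi Apos[of s] CLpos that unfolding fl_def by auto
    moreover have "A s / (C * L) \<le> 2 ^ S * a / (C * L)" using AS[OF that(1)] CLpos by (intro divide_right_mono) auto
    ultimately show ?thesis by linarith
  qed
  have cnt: "real (card {s. s < S \<and> fl s n}) \<le> Q" if "1 \<le> n" for n
    using flat_count[OF xi a that CL CLxi Sa, of \<eta>] unfolding fl_def A_def Q_def by simp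
  have "(\<Sum>s<S. (\<Sum>n\<in>{1..Nst}. bnd \<xi> \<eta> (A s) (A s / (C * L)) n))
      \<le> (\<Sum>s<S. (\<Sum>n\<in>{1..Nst}. 17 * (2 ^ S * a / (C * L)) + (if fl s n then 8 / (C * L * \<xi> * real n) else 0)))"
    using pt by (intro sum_mono) auto
  also have "\<dots> = real S * (real Nst * (17 * (2 ^ S * a / (C * L))))
      + (\<Sum>n\<in>{1..Nst}. (\<Sum>s<S. (if fl s n then 8 / (C * L * \<xi> * real n) else 0)))"
    by (simp add: sum.distrib sum.swap[of _ "{..<S}"])
  also have "\<dots> \<le> real S / 16 + real S / 16"
  proof (rule add_mono)
    have "real Nst * (17 * (2 ^ S * a / (C * L))) \<le> 1 / 16"
      using c2 CLpos by (simp add: field_simps)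
    then show "real S * (real Nst * (17 * (2 ^ S * a / (C * L)))) \<le> real S / 16"
      by (metis mult_left_mono of_nat_0_le_iff times_divide_eq_right mult_1_right)
    have "(\<Sum>n\<in>{1..Nst}. (\<Sum>s<S. (if fl s n then 8 / (C * L * \<xi> * real n) else 0)))
        = (\<Sum>n\<in>{1..Nst}. 8 / (C * L * \<xi> * real n) * real (card {s. s < S \<and> fl s n}))"
    proof (rule sum.cong)
      fix n assume "n \<in> {1..Nst}"
      have "(\<Sum>s<S. (if fl s n then 8 / (C * L * \<xi> * real n) else 0)) = (\<Sum>s\<in>{..<S} \<inter> {s. fl s n}. 8 / (C * L * \<xi> * real n))"
        using sum.inter_restrict[of "{..<S}" "\<lambda>_. 8 / (C * L * \<xi> * real n)" "{s. fl s n}"] by simp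
      also have "{..<S} \<inter> {s. fl s n} = {s. s < S \<and> fl s n}" by auto
      finally show "(\<Sum>s<S. (if fl s n then 8 / (C * L * \<xi> * real n) else 0)) = 8 / (C * L * \<xi> * real n) * real (card {s. s < S \<and> fl s n})"
        by simp
    qed simp
    also have "\<dots> \<le> (\<Sum>n\<in>{1..Nst}. 8 / (C * L * \<xi>) * Q * (1 / real n))"
    proof (rule sum_mono)
      fix n assume n: "n \<in> {1..Nst}"
      have "8 / (C * L * \<xi> * real n) * real (card {s. s < S \<and> fl s n}) \<le> 8 / (C * L * \<xi> * real n) * Q"
        using cnt[of n] n CLpos xi by (intro mult_left_mono) auto
      then show "8 / (C * L * \<xi> * real n) * real (card {s. s < S \<and> fl s n}) \<le> 8 / (C * L * \<xi>) * Q * (1 / real n)"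
        by (simp add: field_simps)
    qed
    also have "\<dots> = 8 / (C * L * \<xi>) * Q * (\<Sum>n\<in>{1..Nst}. 1 / real n)" by (simp add: sum_distrib_left)
    also have "\<dots> \<le> 8 / (C * L * \<xi>) * Q * (1 + ln (real Nst))"
    proof (rule mult_left_mono)
      show "(\<Sum>n\<in>{1..Nst}. 1 / real n) \<le> 1 + ln (real Nst)" by (rule harm_bound[OF Nst])
      show "0 \<le> 8 / (C * L * \<xi>) * Q" unfolding Q_def using CLpos xi by simp
    qed
    also have "\<dots> = (8 * Q * (1 + ln (real Nst))) / (C * L * \<xi>)" by simp
    also have "\<dots> \<le> (C * L * \<xi> * real S / 16) / (C * L * \<xi>)"
      using c3 CLpos xi unfolding Q_def by (intro divide_right_mono) auto
    also have "\<dots> = real S / 16"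
    proof -
      have "C * L * \<xi> \<noteq> 0" using CLpos xi by (metis less_irrefl mult_pos_pos)
      then show ?thesis by simp
    qed
    finally show "(\<Sum>n\<in>{1..Nst}. (\<Sum>s<S. (if fl s n then 8 / (C * L * \<xi> * real n) else 0))) \<le> real S / 16" .
  qed
  finally have up: "(\<Sum>s<S. (\<Sum>n\<in>{1..Nst}. bnd \<xi> \<eta> (A s) (A s / (C * L)) n)) \<le> real S / 8" by simp
  have "(\<Sum>s<S. (1::real)/8) < (\<Sum>s<S. (\<Sum>n\<in>{1..Nst}. bnd \<xi> \<eta> (A s) (A s / (C * L)) n))"
  proof (rule sum_strict_mono)
    have "0 \<in> {..<S}" using S by simp
    then show "{..<S} \<noteq> {}" by blast
  qed (use big in \<open>auto simp: A_def\<close>)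
  then show False using up by simp
qed


lemma compact_step:
  fixes A0 \<tau> \<xi> :: real and \<eta> :: "nat \<Rightarrow> real"
  assumes fin: "\<And>N. \<exists>e\<in>{A0..2*A0}. \<forall>n. 1 \<le> n \<longrightarrow> n \<le> N \<longrightarrow> (\<forall>z::int. \<tau> \<le> \<bar>gg \<xi> \<eta> n e - z\<bar>)"
  shows "\<exists>e\<in>{A0..2*A0}. \<forall>n. 1 \<le> n \<longrightarrow> (\<forall>z::int. \<tau> \<le> \<bar>gg \<xi> \<eta> n e - z\<bar>)"
proof -
  define K where "K N = {A0..2*A0} \<inter> (\<Inter>n\<in>{1..N}. \<Inter>z\<in>(UNIV::int set). {e. \<tau> \<le> \<bar>gg \<xi> \<eta> n e - z\<bar>})" for N
  have Kiff: "e \<in> K N \<longleftrightarrow> e \<in> {A0..2*A0} \<and> (\<forall>n. 1 \<le> n \<longrightarrow> n \<le> N \<longrightarrow> (\<forall>z::int. \<tau> \<le> \<bar>gg \<xi> \<eta> n e - z\<bar>))" for e N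
    unfolding K_def by auto
  have cl: "closed {e. \<tau> \<le> \<bar>gg \<xi> \<eta> n e - of_int z\<bar>}" for n z
    unfolding gg_def by (intro closed_Collect_le continuous_intros)
  have compK: "compact (K N)" for N
    unfolding K_def using cl by (intro compact_Int_closed compact_Icc closed_INT) auto
  have ne: "K N \<noteq> {}" for N using fin[of N] Kiff by blast
  have dec: "M \<le> N \<Longrightarrow> K N \<subseteq> K M" for M N using Kiff by auto
  have "\<Inter>(range K) \<noteq> {}"
  proof (rule compact_fip_Heine_Borel)
    show "compact T" if "T \<in> range K" for T using that compK by auto
    fix F' assume F': "finite F'" "F' \<subseteq> range K"
    show "\<Inter>F' \<noteq> {}"
    proof (cases "F' = {}")
      case True then show ?thesis by simp
    next
      case False
      obtain I where I: "F' = K ` I" "finite I"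
        using F' by (metis finite_subset_image)
      have "I \<noteq> {}" using I False by auto
      have "K (Max I) \<subseteq> K i" if "i \<in> I" for i using dec Max_ge[OF I(2) that] by blast
      then have "K (Max I) \<subseteq> \<Inter>F'" using I by auto
      then show ?thesis using ne[of "Max I"] by auto
    qed
  qed
  then obtain e where e: "\<And>N. e \<in> K N" by auto
  then have "e \<in> {A0..2*A0}" using Kiff by blast
  moreover have "\<forall>n. 1 \<le> n \<longrightarrow> (\<forall>z::int. \<tau> \<le> \<bar>gg \<xi> \<eta> n e - z\<bar>)"
    using e Kiff by blast
  ultimately show ?thesis by blast
qed


lemma exists_pow2: "\<exists>k::nat. x \<le> (2::real) ^ k"
proof -
  obtain k where "x < (2::real) ^ k" using real_arch_pow[of 2 x] by auto
  then show ?thesis by (intro exI[of _ k]) simp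
qed

lemma per_scale:
  fixes \<xi> A0 \<tau> :: real and \<eta> :: "nat \<Rightarrow> real" and Nst d :: nat
  assumes xi: "\<xi> > 0" and A0: "0 < A0" "A0 \<le> 1"
    and tau: "0 < \<tau>" "\<tau> \<le> 1/64"
    and nonroot_amp: "\<And>n. Nst < n \<Longrightarrow> 16 \<le> \<xi> * (1 + A0) ^ (n - 1)"
    and nonroot_lin: "\<And>n. Nst < n \<Longrightarrow> 1 \<le> A0 * \<xi> * real n"
    and dcond: "8 \<le> \<tau> * (1 + A0) ^ d"
    and dsmall: "34 * \<tau> * real d \<le> 1/4"
    and roots: "(\<Sum>n\<in>{1..Nst}. bnd \<xi> \<eta> A0 \<tau> n) \<le> 1/8"
  shows "\<exists>e\<in>{A0..2*A0}. \<forall>n. 1 \<le> n \<longrightarrow> (\<forall>z::int. \<tau> \<le> \<bar>gg \<xi> \<eta> n e - z\<bar>)"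
proof (rule compact_step)
  fix N :: nat
  define X where "X = A0 * DD \<xi> N (2 * A0)"
  obtain E :: nat where E: "26 / \<tau> \<le> 2 ^ E" using exists_pow2 by blast
  obtain F0 :: nat where F0: "2 * (X + 5) / \<tau> \<le> 2 ^ F0" using exists_pow2 by blast
  have X0: "0 \<le> X" unfolding X_def using A0 xi DD_nonneg[of \<xi> "2 * A0" N] by simp
  interpret scale \<xi> A0 \<tau> \<eta> N Nst d F0 E
  proof
    show "\<xi> > 0" "0 < A0" "A0 \<le> 1" "0 < \<tau>" "\<tau> \<le> 1/64" using xi A0 tau by auto
    show "\<And>n. Nst < n \<Longrightarrow> 16 \<le> \<xi> * (1 + A0) ^ (n - 1)" by (rule nonroot_amp)
    show "\<And>n. Nst < n \<Longrightarrow> 1 \<le> A0 * \<xi> * real n" by (rule nonroot_lin)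
    show "8 \<le> \<tau> * (1 + A0) ^ d" by (rule dcond)
    show "34 * \<tau> * real d \<le> 1/4" by (rule dsmall)
    show "(\<Sum>n\<in>{1..Nst}. bnd \<xi> \<eta> A0 \<tau> n) \<le> 1/8" by (rule roots)
    show "26 \<le> \<tau> * 2 ^ E" using E tau by (simp add: field_simps)
    have F0': "2 * (X + 5) \<le> \<tau> * 2 ^ F0" using F0 tau by (simp add: field_simps)
    show "2 * (A0 * DD \<xi> N (2 * A0) + 5) \<le> \<tau> * 2 ^ (F0 + E)"
    proof -
      have "\<tau> * 2 ^ F0 \<le> \<tau> * 2 ^ (F0 + E)" using tau by (intro mult_left_mono power_increasing) auto
      then show ?thesis using F0' unfolding X_def by linarith
    qed
    show "A0 / 2 ^ F0 * DD \<xi> n (2 * A0) \<le> \<tau>" if "n \<le> N" for n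
    proof -
      have "DD \<xi> n (2 * A0) \<le> DD \<xi> N (2 * A0)" using that xi A0 by (intro DD_mono_n) auto
      then have "A0 * DD \<xi> n (2 * A0) \<le> X" unfolding X_def using A0 by (intro mult_left_mono) auto
      also have "\<dots> \<le> 2 * (X + 5)" using X0 by simp
      also have "\<dots> \<le> \<tau> * 2 ^ F0" by (rule F0')
      finally show ?thesis by (simp add: field_simps)
    qed
  qed
  show "\<exists>e\<in>{A0..2*A0}. \<forall>n. 1 \<le> n \<longrightarrow> n \<le> N \<longrightarrow> (\<forall>z::int. \<tau> \<le> \<bar>gg \<xi> \<eta> n e - z\<bar>)"
    by (rule scale_point)
qed


lemma exp_ge_pow2: "(2::real) ^ k \<le> exp (real k)"
proof -
  have "(2::real) ^ k \<le> exp 1 ^ k"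
    using exp_ge_add_one_self[of 1] by (intro power_mono) auto
  also have "\<dots> = exp (real k)" by (simp add: exp_of_nat_mult[symmetric])
  finally show ?thesis .
qed

lemma ln_le_half: "0 < x \<Longrightarrow> ln x \<le> x / (2::real)"
proof -
  assume x: "0 < x"
  have "ln x = 2 * ln (sqrt x)" using x by (simp add: ln_sqrt)
  also have "\<dots> \<le> 2 * (sqrt x - 1)" using x ln_le_minus_one[of "sqrt x"] by simp
  also have "\<dots> \<le> x / 2"
  proof -
    have "0 \<le> (sqrt x - 2) ^ 2" by simp
    then have "0 \<le> x - 4 * sqrt x + 4" using x by (simp add: power2_eq_square algebra_simps)
    then show ?thesis by simp
  qed
  finally show ?thesis .
qed

lemma pow_ge_exp_half:
  fixes x :: real assumes "0 \<le> x" "x \<le> 1/2"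
  shows "exp (real m * x / 2) \<le> (1 + x) ^ m"
proof -
  have "x / 2 \<le> ln (1 + x)"
  proof -
    have "x - x\<^sup>2 \<le> ln (1 + x)" using assms by (intro ln_one_plus_pos_lower_bound) auto
    moreover have "x / 2 \<le> x - x\<^sup>2"
    proof -
      have "x * x \<le> x * (1/2)" using assms by (intro mult_left_mono) auto
      then show ?thesis by (simp add: power2_eq_square)
    qed
    ultimately show ?thesis by linarith
  qed
  then have "real m * (x / 2) \<le> real m * ln (1 + x)" by (intro mult_left_mono) auto
  then have "exp (real m * x / 2) \<le> exp (real m * ln (1 + x))" by simp
  also have "\<dots> = (1 + x) ^ m" using assms by (simp add: exp_of_nat_mult exp_ln)
  finally show ?thesis .
qed


lemma main_pos:
  fixes \<xi> \<delta> :: real and \<eta> :: "nat \<Rightarrow> real"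
  assumes xi: "\<xi> > 0" and dl: "\<delta> > 0"
  shows "\<exists>\<epsilon> \<tau>. 0 < \<epsilon> \<and> \<epsilon> < \<delta> \<and> \<epsilon> / (8192 * \<bar>ln \<epsilon>\<bar>) < \<tau> \<and>
           (\<forall>n. 1 \<le> n \<longrightarrow> (\<forall>z::int. \<tau> \<le> \<bar>\<xi> * (1 + \<epsilon>) ^ n + \<eta> n - z\<bar>))"
proof -
  define C :: real where "C = 1024"
  define Q where "Q = 22 + 4 / \<xi>"
  define S :: nat where "S = nat \<lceil>256 * Q / (C * \<xi>)\<rceil> + 1"
  define lg where "lg = \<bar>ln (16 / \<xi>)\<bar>"
  define P where "P = 1 / \<xi> + 2 * lg + 4"
  define u1 where "u1 = \<bar>ln \<delta>\<bar>"
  define u2 where "u2 = ln (8 * C)"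
  define u3 where "u3 = 272 * 2 ^ S * P / C"
  define u4 where "u4 = ln P"
  define u5 where "u5 = 4 * 2 ^ S / (C * \<xi>)"
  define L where "L = 2 * (real S + 1) + u1 + 2 * u2 + u3 + 1 + u4 + u5 + 1"
  define a where "a = exp (- L)"
  define Nst :: nat where "Nst = nat \<lceil>1 / (\<xi> * a)\<rceil> + nat \<lceil>2 * lg / a\<rceil> + 1"
  have Q0: "Q > 0"
  proof -
    have "0 < 4 / \<xi>" using xi by simp
    then show ?thesis unfolding Q_def by linarith
  qed
  have S1: "1 \<le> S" unfolding S_def by simp
  have lg0: "0 \<le> lg" unfolding lg_def by simp
  have P4: "4 \<le> P" unfolding P_def using xi lg0 by simp
  have lnP: "0 \<le> ln P" using P4 by simp
  have lnC: "0 \<le> ln (8 * C)" unfolding C_def by simp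
  have t1: "0 \<le> 272 * 2 ^ S * P / C" using P4 unfolding C_def by simp
  have t2: "0 \<le> 4 * 2 ^ S / (C * \<xi>)" using xi unfolding C_def by simp
  have u0: "0 \<le> u1" "0 \<le> u2" "0 \<le> u3" "0 \<le> u4" "0 \<le> u5" "0 \<le> real S"
    unfolding u1_def u2_def u3_def u4_def u5_def using lnP lnC t1 t2 by simp_all
  have L1: "2 * real S + 2 \<le> L" unfolding L_def using u0 by (simp add: algebra_simps)
  have L2: "\<bar>ln \<delta>\<bar> + real S + 2 \<le> L" unfolding L_def u1_def[symmetric] using u0 by (simp add: algebra_simps)
  have L3: "2 * ln (8 * C) \<le> L" unfolding L_def u2_def[symmetric] using u0 by (simp add: algebra_simps)
  have L4: "272 * 2 ^ S * P / C \<le> L" unfolding L_def u3_def[symmetric] using u0 by (simp add: algebra_simps)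
  have L5: "1 + ln P \<le> L" unfolding L_def u4_def[symmetric] using u0 by (simp add: algebra_simps)
  have L6: "4 * 2 ^ S / (C * \<xi>) \<le> L" unfolding L_def u5_def[symmetric] using u0 by (simp add: algebra_simps)
  have Lpos: "L > 0" using L1 by linarith
  have a0: "a > 0" unfolding a_def by simp
  have lna: "ln (1 / a) = L" unfolding a_def by (simp add: ln_div)
  have CL: "C * L \<ge> 4096"
  proof -
    have "1 \<le> real S" using S1 by simp
    then have "4 \<le> L" using L1 by linarith
    then show ?thesis unfolding C_def by simp
  qed
  have CLpos: "C * L > 0" using CL by linarith
  have pow_a: "2 ^ k * a \<le> exp (real k - L)" for k :: nat
  proof -
    have "2 ^ k * a \<le> exp (real k) * a" using exp_ge_pow2[of k] a0 by (intro mult_right_mono) auto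
    also have "\<dots> = exp (real k - L)" unfolding a_def by (simp add: exp_diff exp_minus field_simps)
    finally show ?thesis .
  qed
  have Sa: "2 ^ (S + 1) * a \<le> 1 / 2"
  proof -
    have "2 ^ (S + 1) * a \<le> exp (real (S + 1) - L)" by (rule pow_a)
    also have "\<dots> \<le> exp (- 1)" using L1 by simp
    also have "\<dots> \<le> 1 / 2"
    proof -
      have "2 \<le> exp (1::real)" using exp_ge_add_one_self[of 1] by simp
      then show ?thesis by (simp add: exp_minus field_simps)
    qed
    finally show ?thesis .
  qed
  have Sa2: "2 ^ S * a \<le> 1 / 4" using Sa a0 by simp
  have Sdl: "2 ^ (S + 1) * a < \<delta>"
  proof -
    have "2 ^ (S + 1) * a \<le> exp (real (S + 1) - L)" by (rule pow_a)
    also have "\<dots> < exp (ln \<delta>)" using L2 by simp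
    also have "\<dots> = \<delta>" using dl by simp
    finally show ?thesis .
  qed
  have CLxi: "4 * 2 ^ S \<le> C * L * \<xi>"
  proof -
    have "4 * 2 ^ S / (C * \<xi>) \<le> L" by (rule L6)
    then show ?thesis using xi unfolding C_def by (simp add: field_simps)
  qed
  have Nst1: "1 \<le> Nst" unfolding Nst_def by simp
  have aNst: "a * real Nst \<le> P"
  proof -
    have "real Nst \<le> (1 / (\<xi> * a) + 1) + (2 * lg / a + 1) + 1"
      unfolding Nst_def using xi a0 lg0 by (simp add: of_nat_nat) linarith
    then have "a * real Nst \<le> a * ((1 / (\<xi> * a) + 1) + (2 * lg / a + 1) + 1)" using a0 by (intro mult_left_mono) auto
    also have "\<dots> = 1 / \<xi> + 2 * lg + 3 * a" using a0 xi by (simp add: field_simps)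
    also have "\<dots> \<le> P"
    proof -
      have "a \<le> 2 ^ S * a" using a0 by simp
      then have "a \<le> 1/4" using Sa2 by linarith
      then show ?thesis unfolding P_def by simp
    qed
    finally show ?thesis .
  qed
  have c2: "17 * 2 ^ S * a * real Nst \<le> C * L / 16"
  proof -
    have "17 * 2 ^ S * a * real Nst = 17 * 2 ^ S * (a * real Nst)" by simp
    also have "\<dots> \<le> 17 * 2 ^ S * P" using aNst by (intro mult_left_mono) auto
    also have "\<dots> \<le> C * L / 16" using L4 unfolding C_def by (simp add: field_simps)
    finally show ?thesis .
  qed
  have c3: "8 * (22 + 4 / \<xi>) * (1 + ln (real Nst)) \<le> C * L * \<xi> * real S / 16"
  proof -
    have "ln (real Nst) \<le> ln (P / a)"
    proof -
      have "real Nst \<le> P / a" using aNst a0 by (simp add: field_simps mult.commute)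
      then show ?thesis using Nst1 by (intro ln_mono) auto
    qed
    also have "\<dots> = ln P + L" using P4 a0 lna by (simp add: ln_div)
    finally have "1 + ln (real Nst) \<le> 2 * L" using L5 by linarith
    moreover have "0 \<le> 1 + ln (real Nst)" using Nst1 by simp
    ultimately have "8 * Q * (1 + ln (real Nst)) \<le> 8 * Q * (2 * L)" using Q0 by (intro mult_left_mono) auto
    also have "\<dots> \<le> C * L * \<xi> * real S / 16"
    proof -
      have "256 * Q / (C * \<xi>) \<le> real S" unfolding S_def by linarith
      then have "256 * Q \<le> C * \<xi> * real S" using xi unfolding C_def by (simp add: field_simps)
      then have "256 * Q * L \<le> C * \<xi> * real S * L" using Lpos by (intro mult_right_mono) auto
      then show ?thesis by (simp add: algebra_simps)
    qed
    finally show ?thesis unfolding Q_def .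
  qed
  obtain s where s: "s < S" and roots: "(\<Sum>n\<in>{1..Nst}. bnd \<xi> \<eta> (2 ^ s * a) (2 ^ s * a / (C * L)) n) \<le> 1/8"
    using select_scale[OF xi a0 S1 _ CLxi _ Nst1 c2 c3, of \<eta>] CL Sa2 by force
  define A0 where "A0 = 2 ^ s * a"
  define \<tau> where "\<tau> = A0 / (C * L)"
  have A0a: "a \<le> A0" unfolding A0_def using a0 by simp
  have A0S: "A0 \<le> 2 ^ S * a" unfolding A0_def using s a0 by (intro mult_right_mono power_increasing) auto
  have A0h: "A0 \<le> 1/4" using A0S Sa2 by linarith
  have A0pos: "0 < A0" using A0a a0 by linarith
  have tau0: "0 < \<tau>" unfolding \<tau>_def using A0pos CLpos by simp
  have tau1: "\<tau> \<le> A0 / 4096" unfolding \<tau>_def using CL A0pos by (intro divide_left_mono) auto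
  have tau64: "\<tau> \<le> 1 / 64" using tau1 A0h by linarith
  have amp: "16 \<le> \<xi> * (1 + A0) ^ (n - 1)" if "Nst < n" for n
  proof -
    have "2 * lg / a \<le> real (n - 1)"
    proof -
      have "nat \<lceil>2 * lg / a\<rceil> \<le> n - 1" using that unfolding Nst_def by linarith
      then have "real (nat \<lceil>2 * lg / a\<rceil>) \<le> real (n - 1)" by (simp only: of_nat_le_iff)
      then show ?thesis by linarith
    qed
    then have "lg \<le> real (n - 1) * a / 2" using a0 by (simp add: field_simps)
    also have "\<dots> \<le> real (n - 1) * A0 / 2" using A0a by (intro divide_right_mono mult_left_mono) auto
    finally have "exp lg \<le> exp (real (n - 1) * A0 / 2)" by simp
    also have "\<dots> \<le> (1 + A0) ^ (n - 1)" using A0pos A0h by (intro pow_ge_exp_half) auto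
    finally have "exp lg \<le> (1 + A0) ^ (n - 1)" .
    moreover have "16 / \<xi> \<le> exp lg"
    proof -
      have "16 / \<xi> = exp (ln (16 / \<xi>))" using xi by simp
      also have "\<dots> \<le> exp lg" unfolding lg_def by simp
      finally show ?thesis .
    qed
    ultimately have "16 / \<xi> \<le> (1 + A0) ^ (n - 1)" by linarith
    then show ?thesis using xi by (simp add: field_simps)
  qed
  have lin: "1 \<le> A0 * \<xi> * real n" if "Nst < n" for n
  proof -
    have "1 / (\<xi> * a) \<le> real n"
    proof -
      have "nat \<lceil>1 / (\<xi> * a)\<rceil> \<le> n" using that unfolding Nst_def by linarith
      then have "real (nat \<lceil>1 / (\<xi> * a)\<rceil>) \<le> real n" by (simp only: of_nat_le_iff)
      then show ?thesis by linarith
    qed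
    then have "1 \<le> a * \<xi> * real n" using xi a0 by (simp add: field_simps)
    also have "\<dots> \<le> A0 * \<xi> * real n" using A0a xi by (intro mult_right_mono) auto
    finally show ?thesis .
  qed
  define d :: nat where "d = nat \<lceil>2 * ln (8 / \<tau>) / A0\<rceil>"
  have ln8t: "0 \<le> ln (8 / \<tau>)" using tau0 tau64 by (simp add: field_simps)
  have dge: "2 * ln (8 / \<tau>) / A0 \<le> real d" unfolding d_def by linarith
  have dle: "real d \<le> 2 * ln (8 / \<tau>) / A0 + 1" unfolding d_def using ln8t A0pos by (simp add: of_nat_nat)
  have dcond: "8 \<le> \<tau> * (1 + A0) ^ d"
  proof -
    have "ln (8 / \<tau>) \<le> real d * A0 / 2" using dge A0pos by (simp add: field_simps)
    then have "exp (ln (8 / \<tau>)) \<le> exp (real d * A0 / 2)" by simp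
    also have "\<dots> \<le> (1 + A0) ^ d" using A0pos A0h by (intro pow_ge_exp_half) auto
    finally have "8 / \<tau> \<le> (1 + A0) ^ d" using tau0 by simp
    then show ?thesis using tau0 by (simp add: field_simps)
  qed
  have dsmall: "34 * \<tau> * real d \<le> 1/4"
  proof -
    have lnb: "ln (8 / \<tau>) \<le> 2 * L"
    proof -
      have e1: "8 / \<tau> = (8 * C * L) * (1 / A0)" unfolding \<tau>_def using A0pos CLpos by (simp add: field_simps)
      have p1: "0 < 8 * C * L" using CLpos by simp
      have p2: "0 < 1 / A0" using A0pos by simp
      have r1: "ln (8 / \<tau>) = ln (8 * C * L) + ln (1 / A0)" unfolding e1 using p1 p2 ln_mult[of "8 * C * L" "1 / A0"] Lpos unfolding C_def by simp
      have r2: "ln (1 / A0) \<le> L"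
      proof -
        have "ln (1 / A0) \<le> ln (1 / a)" using A0a a0 by (intro ln_mono) (auto simp: field_simps)
        then show ?thesis using lna by simp
      qed
      have r3: "ln (8 * C * L) = ln (8 * C) + ln L"
        using ln_mult[of "8 * C" L] Lpos unfolding C_def by simp
      have r4: "ln L \<le> L / 2" using Lpos by (rule ln_le_half)
      show ?thesis using r1 r2 r3 r4 L3 by linarith
    qed
    have "34 * \<tau> * real d \<le> 34 * \<tau> * (2 * ln (8 / \<tau>) / A0 + 1)" using dle tau0 by (intro mult_left_mono) auto
    also have "\<dots> = 68 * ln (8 / \<tau>) / (C * L) + 34 * \<tau>"
    proof -
      have "C \<noteq> 0" "L \<noteq> 0" using Lpos unfolding C_def by auto
      then show ?thesis unfolding \<tau>_def using A0pos by (simp add: field_simps)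
    qed
    also have "\<dots> \<le> 68 * (2 * L) / (C * L) + 34 * \<tau>" using lnb CLpos by (intro add_right_mono divide_right_mono) auto
    also have "\<dots> = 136 / 1024 + 34 * \<tau>" using Lpos unfolding C_def by simp
    also have "\<dots> \<le> 1 / 4" using tau1 A0h by linarith
    finally show ?thesis .
  qed
  have roots': "(\<Sum>n\<in>{1..Nst}. bnd \<xi> \<eta> A0 \<tau> n) \<le> 1/8" using roots unfolding A0_def \<tau>_def .
  have A01: "A0 \<le> 1" using A0h by linarith
  have "\<exists>e\<in>{A0..2*A0}. \<forall>n. 1 \<le> n \<longrightarrow> (\<forall>z::int. \<tau> \<le> \<bar>gg \<xi> \<eta> n e - z\<bar>)"
    by (rule per_scale[where Nst=Nst and d=d, OF xi A0pos A01 tau0 tau64 amp lin dcond dsmall roots'])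
  then obtain e where e: "e \<in> {A0..2*A0}" and good: "\<forall>n. 1 \<le> n \<longrightarrow> (\<forall>z::int. \<tau> \<le> \<bar>gg \<xi> \<eta> n e - z\<bar>)"
    by blast
  have e0: "0 < e" using e A0pos by simp
  have eS: "e \<le> 2 ^ (S + 1) * a" using e A0S by simp
  have edl: "e < \<delta>" using eS Sdl by linarith
  have lne: "L / 2 \<le> \<bar>ln e\<bar>"
  proof -
    have "ln e \<le> ln (2 ^ (S + 1) * a)" using eS e0 by (intro ln_mono) auto
    also have "\<dots> = real (S + 1) * ln 2 - L" using a0 unfolding a_def by (simp add: ln_mult ln_realpow algebra_simps)
    also have "\<dots> \<le> real (S + 1) - L"
    proof -
      have "ln (2::real) \<le> 1" using ln_le_minus_one[of 2] by simp
      then show ?thesis by (simp add: mult_left_le)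
    qed
    finally have "ln e \<le> real (S + 1) - L" .
    then show ?thesis using L1 by linarith
  qed
  have "e / (8192 * \<bar>ln e\<bar>) < \<tau>"
  proof -
    have lpos: "0 < \<bar>ln e\<bar>" using lne Lpos by linarith
    have "e / (8192 * \<bar>ln e\<bar>) \<le> (2 * A0) / (8192 * (L / 2))"
      using e lne lpos Lpos A0pos by (intro frac_le) auto
    also have "\<dots> = A0 / (2 * C * L)" unfolding C_def by simp
    also have "\<dots> < \<tau>" unfolding \<tau>_def using A0pos CLpos by (simp add: field_simps)
    finally show ?thesis .
  qed
  moreover have "\<forall>n. 1 \<le> n \<longrightarrow> (\<forall>z::int. \<tau> \<le> \<bar>\<xi> * (1 + e) ^ n + \<eta> n - z\<bar>)"
    using good unfolding gg_def by simp
  ultimately show ?thesis using e0 edl by blast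
qed


theorem theorem2:
  fixes M :: real
  assumes "M > 0"
  shows "\<exists>\<gamma>::real. \<gamma> > 0 \<and>
    (\<forall>\<xi>::real. \<forall>\<eta>::nat \<Rightarrow> real. \<forall>\<delta>::real.
       \<xi> \<noteq> 0 \<longrightarrow> \<bar>\<xi>\<bar> \<le> M \<longrightarrow> \<delta> > 0 \<longrightarrow>
       (\<exists>\<epsilon>::real. 0 < \<epsilon> \<and> \<epsilon> < \<delta> \<and>
          (INF n\<in>{1::nat..}. dist_int (\<xi> * (1 + \<epsilon>) ^ n + \<eta> n))
            > \<gamma> * \<epsilon> / \<bar>ln \<epsilon>\<bar>))"
proof (rule exI[of _ "1/8192"], intro conjI allI impI)
  show "(0::real) < 1/8192" by simp
  fix \<xi> :: real and \<eta> :: "nat \<Rightarrow> real" and \<delta> :: real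
  assume xi: "\<xi> \<noteq> 0" and "\<bar>\<xi>\<bar> \<le> M" and dl: "\<delta> > 0"
  define \<sigma> :: real where "\<sigma> = (if \<xi> > 0 then 1 else -1)"
  have sig: "\<sigma> * \<sigma> = 1" unfolding \<sigma>_def by simp
  define \<eta>' where "\<eta>' n = \<sigma> * \<eta> n" for n
  have axi: "\<bar>\<xi>\<bar> > 0" using xi by simp
  obtain \<epsilon> \<tau> where e: "0 < \<epsilon>" "\<epsilon> < \<delta>" "\<epsilon> / (8192 * \<bar>ln \<epsilon>\<bar>) < \<tau>"
    and good: "\<forall>n. 1 \<le> n \<longrightarrow> (\<forall>z::int. \<tau> \<le> \<bar>\<bar>\<xi>\<bar> * (1 + \<epsilon>) ^ n + \<eta>' n - z\<bar>)"
    using main_pos[OF axi dl, of \<eta>'] by blast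
  have orig: "\<tau> \<le> dist_int (\<xi> * (1 + \<epsilon>) ^ n + \<eta> n)" if n: "1 \<le> n" for n
    unfolding dist_int_ge_iff
  proof
    fix k :: real assume "k \<in> \<int>"
    then obtain z :: int where k: "k = of_int z" by (auto elim: Ints_cases)
    have absx: "\<bar>\<xi>\<bar> = \<sigma> * \<xi>" unfolding \<sigma>_def using xi by auto
    have "\<bar>\<xi> * (1 + \<epsilon>) ^ n + \<eta> n - k\<bar> = \<bar>\<sigma> * (\<xi> * (1 + \<epsilon>) ^ n + \<eta> n - k)\<bar>"
      unfolding \<sigma>_def by (simp add: abs_minus_commute)
    also have "\<sigma> * (\<xi> * (1 + \<epsilon>) ^ n + \<eta> n - k) = \<bar>\<xi>\<bar> * (1 + \<epsilon>) ^ n + \<eta>' n - of_int (if \<xi> > 0 then z else - z)"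
      unfolding absx \<eta>'_def k \<sigma>_def by (simp add: algebra_simps)
    finally show "\<tau> \<le> \<bar>\<xi> * (1 + \<epsilon>) ^ n + \<eta> n - k\<bar>" using good n by simp
  qed
  have "\<tau> \<le> (INF n\<in>{1::nat..}. dist_int (\<xi> * (1 + \<epsilon>) ^ n + \<eta> n))"
    by (rule cINF_greatest) (use orig in auto)
  moreover have "1 / 8192 * \<epsilon> / \<bar>ln \<epsilon>\<bar> = \<epsilon> / (8192 * \<bar>ln \<epsilon>\<bar>)" by simp
  ultimately show "\<exists>\<epsilon>::real. 0 < \<epsilon> \<and> \<epsilon> < \<delta> \<and>
          (INF n\<in>{1::nat..}. dist_int (\<xi> * (1 + \<epsilon>) ^ n + \<eta> n))
            > 1/8192 * \<epsilon> / \<bar>ln \<epsilon>\<bar>"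
    using e by (intro exI[of _ \<epsilon>]) auto
qed


end
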